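(* Fix $\varepsilon\in(0,1/2)$. There is a constant $B(\varepsilon)\in(0,\infty)$ such that for every $N$ and every $\eta>0$ the following holds. If $V_N=\mathbb Z/2N\mathbb Z$ (with $2N\ge3$) and $(K_i)_{i\ge1}$ is any sequence with $K_i\in\mathcal Q_{\mathrm{lazy}}(\varepsilon)$ for all $i$, or if $V_N=\mathbb Z/(2N+1)\mathbb Z$ and $(K_i)_{i\ge1}$ is any sequence with $K_i\in\mathcal Q(\varepsilon)$ for all $i$, then for all $n\ge B(\varepsilon)N^2(1+\log_+(1/\eta))$, \[\max_{x,y,z\in V_N}\Bigl|\frac{K_{0,n}(x,z)}{K_{0,n}(y,z)}-1\Bigr|\le\eta.\] In particular, the total variation $\eta$-merging time of $\mathcal Q_{\mathrm{lazy}}(\varepsilon)$ on $\mathbb Z/2N\mathbb Z$ (resp. of $\mathcal Q(\varepsilon)$ on $\mathbb Z/(2N+1)\mathbb Z$) is at most $B(\varepsilon)N^2(1+\log_+(1/\eta))$.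
   Context: $Q$ is the simple random walk kernel on $\mathbb Z/p\mathbb Z$: $Q(x,y)=1/2$ if $y=x\pm1$, $0$ otherwise. For $\delta\in(-1/2,1/2)$, $Q_\delta=Q+\Delta_\delta$ with $\Delta_\delta(0,1)=\delta$, $\Delta_\delta(0,-1)=-\delta$, $\Delta_\delta(x,y)=0$ otherwise. $\mathcal Q(\varepsilon)=\{Q_\delta:\delta\in[-\varepsilon,\varepsilon]\}$ and $\mathcal Q_{\mathrm{lazy}}(\varepsilon)=\{\frac12(I+K):K\in\mathcal Q(\varepsilon)\}$. $K_{0,n}=K_1K_2\cdots K_n$ (matrix product). The family $\mathcal Q$ has total variation $\eta$-merging time at most $T$ if for every sequence $(K_i)$ with $K_i\in\mathcal Q$ and every $t>T$, $\max_{x,y}\|K_{0,t}(x,\cdot)-K_{0,t}(y,\cdot)\|_{\mathrm{TV}}\le\eta$, where $\|\mu-\nu\|_{\mathrm{TV}}=\sup_A(\mu(A)-\nu(A))$. Conventions $0/0=1$, $a/0=\infty$ for $a>0$. $\log_+t=\max(\log t,0)$. *)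

theory Defs
  imports Complex_Main
begin

text \<open>States of Z/pZ are represented by 0..<p; kernels are functions nat => nat => real,
  only their values on {0..<p} x {0..<p} matter.\<close>

type_synonym kernel = "nat \<Rightarrow> nat \<Rightarrow> real"

definition srw :: "nat \<Rightarrow> kernel" where
  "srw p x y = (if y = (x + 1) mod p then 1/2 else 0) + (if y = (x + p - 1) mod p then 1/2 else 0)"

definition Delta :: "nat \<Rightarrow> real \<Rightarrow> kernel" where
  "Delta p \<delta> x y = (if x = 0 \<and> y = 1 mod p then \<delta> else 0) - (if x = 0 \<and> y = (p - 1) mod p then \<delta> else 0)"

definition Qd :: "nat \<Rightarrow> real \<Rightarrow> kernel" where
  "Qd p \<delta> x y = srw p x y + Delta p \<delta> x y"

definition Qfam :: "nat \<Rightarrow> real \<Rightarrow> kernel set" where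
  "Qfam p \<epsilon> = {Qd p \<delta> | \<delta>. -\<epsilon> \<le> \<delta> \<and> \<delta> \<le> \<epsilon>}"

definition idK :: kernel where
  "idK x y = (if x = y then 1 else 0)"

definition Qlazy :: "nat \<Rightarrow> real \<Rightarrow> kernel set" where
  "Qlazy p \<epsilon> = {(\<lambda>x y. (idK x y + K x y) / 2) | K. K \<in> Qfam p \<epsilon>}"

definition kmult :: "nat \<Rightarrow> kernel \<Rightarrow> kernel \<Rightarrow> kernel" where
  "kmult p A B x z = (\<Sum>y<p. A x y * B y z)"

text \<open>K_{0,n} = K_1 K_2 ... K_n (K_{0,0} = identity).\<close>
fun kprod :: "nat \<Rightarrow> (nat \<Rightarrow> kernel) \<Rightarrow> nat \<Rightarrow> kernel" where
  "kprod p K 0 = idK"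
| "kprod p K (Suc n) = kmult p (kprod p K n) (K (Suc n))"

text \<open>|a/b - 1| <= eta with the conventions 0/0 = 1 and a/0 = infinity for a > 0
  (entries are nonnegative).\<close>
definition ratio_close :: "real \<Rightarrow> real \<Rightarrow> real \<Rightarrow> bool" where
  "ratio_close a b \<eta> = (if b = 0 then a = 0 else \<bar>a / b - 1\<bar> \<le> \<eta>)"

definition log_plus :: "real \<Rightarrow> real" where
  "log_plus t = max (ln t) 0"

definition tv :: "nat \<Rightarrow> (nat \<Rightarrow> real) \<Rightarrow> (nat \<Rightarrow> real) \<Rightarrow> real" where
  "tv p \<mu> \<nu> = Max ((\<lambda>A. (\<Sum>z\<in>A. \<mu> z) - (\<Sum>z\<in>A. \<nu> z)) ` Pow {0..<p})"

definition merging_time_le :: "nat \<Rightarrow> kernel set \<Rightarrow> real \<Rightarrow> real \<Rightarrow> bool" where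
  "merging_time_le p F \<eta> T = (\<forall>K. (\<forall>i\<ge>1. K i \<in> F) \<longrightarrow>
     (\<forall>t::nat. real t > T \<longrightarrow> (\<forall>x<p. \<forall>y<p. tv p (kprod p K t x) (kprod p K t y) \<le> \<eta>)))"

end

theory Submission
  imports Defs
begin


definition rf :: "nat \<Rightarrow> nat \<Rightarrow> nat" where "rf p y = (p - y) mod p"

lemma rf_lt: "0 < p \<Longrightarrow> rf p y < p" by (simp add: rf_def)
lemma rf_rf: "y < p \<Longrightarrow> rf p (rf p y) = y"
  by (cases "y = 0") (auto simp: rf_def)
lemma rf_0[simp]: "rf p 0 = 0" by (simp add: rf_def)

lemma sum_rf: assumes "0 < p" shows "(\<Sum>y<p. f (rf p y)) = (\<Sum>y<p. f y)"
  by (rule sum.reindex_bij_witness[of _ "rf p" "rf p"]) (auto simp: rf_rf rf_lt assms)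

lemma kmult_assoc: "kmult p (kmult p A B) C x z = kmult p A (kmult p B C) x z"
  unfolding kmult_def
  by (simp add: sum_distrib_left sum_distrib_right mult.assoc) (rule sum.swap)

lemma kprod_split: "z < p \<Longrightarrow> kprod p K (m + n) x z = kmult p (kprod p K m) (kprod p (\<lambda>i. K (m + i)) n) x z"
proof (induction n arbitrary: z)
  case 0
  have "kmult p (kprod p K m) idK x z = (\<Sum>y<p. kprod p K m x y * (if y = z then 1 else 0))"
    by (simp add: kmult_def idK_def)
  also have "\<dots> = kprod p K m x z" using 0 by (simp add: if_distrib cong: if_cong)
  finally show ?case by simp
next
  case (Suc n)
  have "kprod p K (m + Suc n) x z = (\<Sum>y<p. kprod p K (m + n) x y * K (m + Suc n) y z)"
    by (simp add: kmult_def)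
  also have "\<dots> = (\<Sum>y<p. kmult p (kprod p K m) (kprod p (\<lambda>i. K (m + i)) n) x y * K (m + Suc n) y z)"
    using Suc.IH by (intro sum.cong) auto
  also have "\<dots> = kmult p (kmult p (kprod p K m) (kprod p (\<lambda>i. K (m + i)) n)) (K (m + Suc n)) x z"
    by (simp add: kmult_def)
  also have "\<dots> = kmult p (kprod p K m) (kprod p (\<lambda>i. K (m + i)) (Suc n)) x z"
    by (simp add: kmult_assoc)
  finally show ?case .
qed

lemma kprod_nonneg:
  assumes "\<And>i y z. i \<ge> 1 \<Longrightarrow> y < p \<Longrightarrow> z < p \<Longrightarrow> 0 \<le> K i y z"
  shows "z < p \<Longrightarrow> 0 \<le> kprod p K n x z"
proof (induction n arbitrary: z)
  case 0 then show ?case by (simp add: idK_def)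
next
  case (Suc n) then show ?case
    by (auto simp: kmult_def intro!: sum_nonneg mult_nonneg_nonneg assms)
qed

lemma kprod_rowsum:
  assumes "\<And>i y. i \<ge> 1 \<Longrightarrow> y < p \<Longrightarrow> (\<Sum>z<p. K i y z) = 1"
  shows "x < p \<Longrightarrow> (\<Sum>z<p. kprod p K n x z) = 1"
proof (induction n)
  case 0 then show ?case by (simp add: idK_def)
next
  case (Suc n)
  have "(\<Sum>z<p. kprod p K (Suc n) x z) = (\<Sum>y<p. kprod p K n x y * (\<Sum>z<p. K (Suc n) y z))"
    by (simp add: kmult_def sum_distrib_left) (rule sum.swap)
  also have "\<dots> = (\<Sum>y<p. kprod p K n x y)" using assms by simp
  finally show ?case using Suc by simp
qed


lemma sum_if0: fixes f :: "nat \<Rightarrow> real" shows "0 < p \<Longrightarrow> (\<Sum>y<p. (if y = 0 then 0 else f y)) = (\<Sum>y<p. f y) - f (0::nat)"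
proof -
  assume p: "0 < p"
  have "(\<Sum>y<p. f y) = (\<Sum>y<p. (if y = 0 then f y else 0) + (if y = 0 then 0 else f y))"
    by (intro sum.cong) auto
  also have "\<dots> = f 0 + (\<Sum>y<p. (if y = 0 then 0 else f y))"
    using p by (simp add: sum.distrib sum.delta)
  finally show ?thesis by simp
qed

locale cmp =
  fixes p :: nat and P :: kernel and \<theta> :: real
  assumes p_pos: "0 < p"
    and th: "0 \<le> \<theta>"
    and P_nn: "\<And>y z. y < p \<Longrightarrow> z < p \<Longrightarrow> 0 \<le> P y z"
    and P_sym: "\<And>y z. y < p \<Longrightarrow> z < p \<Longrightarrow> P (rf p y) (rf p z) = P y z"
begin

definition good :: "kernel \<Rightarrow> bool" where
  "good Q \<longleftrightarrow> (\<forall>y z. 0 < y \<longrightarrow> y < p \<longrightarrow> z < p \<longrightarrow> Q y z = P y z)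
     \<and> (\<forall>z<p. (1-\<theta>) * P 0 z \<le> Q 0 z \<and> Q 0 z \<le> (1+\<theta>) * P 0 z)
     \<and> (\<forall>z<p. Q 0 z + Q 0 (rf p z) = P 0 z + P 0 (rf p z))"

abbreviation "Pn n \<equiv> kprod p (\<lambda>_. P) n"

lemma I1:
  assumes K: "\<And>i. i \<ge> 1 \<Longrightarrow> good (K i)" and w: "w < p"
  shows "z < p \<Longrightarrow> kprod p K n w z + kprod p K n w (rf p z) = Pn n w z + Pn n w (rf p z)"
proof (induction n arbitrary: z)
  case 0 then show ?case by (simp add: idK_def)
next
  case (Suc n)
  define S where "S y = P y z + P y (rf p z)" for y
  have rz: "rf p z < p" using p_pos by (simp add: rf_lt)
  have KS: "K (Suc n) y z + K (Suc n) y (rf p z) = S y" if "y < p" for y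
  proof (cases "y = 0")
    case True then show ?thesis using K[of "Suc n"] Suc.prems by (simp add: good_def S_def)
  next
    case False then show ?thesis using K[of "Suc n"] Suc.prems rz that by (simp add: good_def S_def)
  qed
  have Ssym: "S (rf p y) = S y" if "y < p" for y
    using P_sym[of "rf p y" z] P_sym[of "rf p y" "rf p z"] that Suc.prems rz p_pos
    by (simp add: S_def rf_rf rf_lt)
  have gen: "2 * (\<Sum>y<p. f y * S y) = (\<Sum>y<p. (f y + f (rf p y)) * S y)" for f
  proof -
    have "(\<Sum>y<p. f y * S y) = (\<Sum>y<p. f (rf p y) * S (rf p y))"
      using sum_rf[OF p_pos, of "\<lambda>y. f y * S y"] by simp
    also have "\<dots> = (\<Sum>y<p. f (rf p y) * S y)" by (intro sum.cong) (auto simp: Ssym)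
    finally show ?thesis by (simp add: algebra_simps sum.distrib)
  qed
  have "kprod p K (Suc n) w z + kprod p K (Suc n) w (rf p z) = (\<Sum>y<p. kprod p K n w y * (K (Suc n) y z + K (Suc n) y (rf p z)))"
    by (simp add: kmult_def distrib_left sum.distrib)
  also have "\<dots> = (\<Sum>y<p. kprod p K n w y * S y)"
    by (intro sum.cong) (auto simp: KS)
  also have "\<dots> = (\<Sum>y<p. Pn n w y * S y)"
  proof -
    have "2 * (\<Sum>y<p. kprod p K n w y * S y) = 2 * (\<Sum>y<p. Pn n w y * S y)"
      unfolding gen by (intro sum.cong) (auto simp: Suc.IH)
    then show ?thesis by simp
  qed
  also have "\<dots> = Pn (Suc n) w z + Pn (Suc n) w (rf p z)"
    by (simp add: kmult_def S_def distrib_left sum.distrib)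
  finally show ?case .
qed

lemma I1_0:
  assumes K: "\<And>i. i \<ge> 1 \<Longrightarrow> good (K i)" and w: "w < p"
  shows "kprod p K n w 0 = Pn n w 0"
  using I1[OF K w, where z=0 and n=n] p_pos by simp

definition P0 :: kernel where "P0 y z = (if y = 0 then 0 else P y z)"
abbreviation "Tn n \<equiv> kprod p (\<lambda>_. P0) n"

lemma Tn_nn: "z < p \<Longrightarrow> 0 \<le> Tn n w z"
  by (rule kprod_nonneg) (auto simp: P0_def P_nn)

lemma Pn_nn: "z < p \<Longrightarrow> 0 \<le> Pn n w z"
  by (rule kprod_nonneg) (auto simp: P_nn)

lemma I2:
  assumes K: "\<And>i. i \<ge> 1 \<Longrightarrow> good (K i)" and w: "w < p"
  shows "z < p \<Longrightarrow> \<bar>kprod p K n w z - Pn n w z\<bar> \<le> \<theta> * (Pn n w z - Tn n w z)"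
proof (induction n arbitrary: z)
  case 0 then show ?case by (simp add: idK_def)
next
  case (Suc n)
  define D where "D y = kprod p K n w y - Pn n w y" for y
  define E where "E y = Pn n w y - Tn n w y" for y
  define d where "d = K (Suc n) 0 z - P 0 z"
  have gK: "good (K (Suc n))" using K by simp
  have Kyz: "K (Suc n) y z = P y z + (if y = 0 then d else 0)" if "y < p" for y
    using gK that Suc.prems by (cases "y = 0") (auto simp: good_def d_def)
  have dle: "\<bar>d\<bar> \<le> \<theta> * P 0 z"
    using gK Suc.prems P_nn[of 0 z] p_pos by (auto simp: good_def d_def abs_le_iff algebra_simps)
  have D0: "D 0 = 0" using I1_0[OF K w] by (simp add: D_def)
  have DE: "\<bar>D y\<bar> \<le> \<theta> * E y" if "y < p" for y using Suc.IH that by (simp add: D_def E_def)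
  have p0: "0 \<in> {..<p}" using p_pos by simp
  have "kprod p K (Suc n) w z - Pn (Suc n) w z = (\<Sum>y<p. kprod p K n w y * (P y z + (if y = 0 then d else 0))) - (\<Sum>y<p. Pn n w y * P y z)"
    by (simp add: kmult_def Kyz)
  also have "\<dots> = (\<Sum>y<p. D y * P y z) + kprod p K n w 0 * d"
    using p0 by (simp add: D_def algebra_simps sum.distrib sum_subtractf if_distrib[of "\<lambda>t. _ * t"] sum.delta cong: if_cong)
  also have "\<dots> = (\<Sum>y<p. D y * P y z) + Pn n w 0 * d" using I1_0[OF K w] by simp
  finally have eq: "kprod p K (Suc n) w z - Pn (Suc n) w z = (\<Sum>y<p. D y * P y z) + Pn n w 0 * d" .
  have "\<bar>\<Sum>y<p. D y * P y z\<bar> \<le> (\<Sum>y<p. \<bar>D y\<bar> * P y z)"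
    using P_nn Suc.prems by (auto intro!: order_trans[OF sum_abs] sum_mono simp: abs_mult)
  also have "\<dots> = (\<Sum>y<p. (if y = 0 then 0 else \<bar>D y\<bar>) * P y z)"
    by (intro sum.cong) (auto simp: D0)
  also have "\<dots> \<le> (\<Sum>y<p. (if y = 0 then 0 else \<theta> * E y) * P y z)"
    using P_nn Suc.prems DE by (intro sum_mono) (auto intro: mult_right_mono)
  also have "\<dots> = \<theta> * ((\<Sum>y<p. E y * P y z) - E 0 * P 0 z)"
  proof -
    have "(\<Sum>y<p. (if y = 0 then 0 else \<theta> * E y) * P y z) = (\<Sum>y<p. (if y = 0 then 0 else \<theta> * E y * P y z))"
      by (intro sum.cong) auto
    also have "\<dots> = (\<Sum>y<p. \<theta> * E y * P y z) - \<theta> * E 0 * P 0 z"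
      by (rule sum_if0[OF p_pos])
    also have "\<dots> = \<theta> * ((\<Sum>y<p. E y * P y z) - E 0 * P 0 z)"
      by (simp add: sum_distrib_left algebra_simps)
    finally show ?thesis .
  qed
  finally have b1: "\<bar>\<Sum>y<p. D y * P y z\<bar> \<le> \<theta> * ((\<Sum>y<p. E y * P y z) - E 0 * P 0 z)" .
  have b2: "\<bar>Pn n w 0 * d\<bar> \<le> \<theta> * (Pn n w 0 * P 0 z)"
  proof -
    have pn0: "0 \<le> Pn n w 0" using Pn_nn[where z=0] p_pos by blast
    have "\<bar>Pn n w 0 * d\<bar> = Pn n w 0 * \<bar>d\<bar>" using pn0 by (simp add: abs_mult)
    also have "\<dots> \<le> Pn n w 0 * (\<theta> * P 0 z)" using dle pn0 by (rule mult_left_mono)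
    finally show ?thesis by (simp add: algebra_simps)
  qed
  have Eeq: "Pn (Suc n) w z - Tn (Suc n) w z = (\<Sum>y<p. E y * P y z) + Tn n w 0 * P 0 z"
  proof -
    have "Tn (Suc n) w z = (\<Sum>y<p. Tn n w y * P y z) - Tn n w 0 * P 0 z"
    proof -
      have "Tn (Suc n) w z = (\<Sum>y<p. Tn n w y * P y z - (if y = 0 then Tn n w 0 * P 0 z else 0))"
        by (simp add: kmult_def P0_def) (intro sum.cong, auto)
      also have "\<dots> = (\<Sum>y<p. Tn n w y * P y z) - Tn n w 0 * P 0 z"
        using p0 by (simp add: sum_subtractf sum.delta)
      finally show ?thesis .
    qed
    then show ?thesis by (simp add: kmult_def E_def algebra_simps sum_subtractf)
  qed
  have "\<bar>kprod p K (Suc n) w z - Pn (Suc n) w z\<bar> \<le> \<theta> * ((\<Sum>y<p. E y * P y z) - E 0 * P 0 z) + \<theta> * (Pn n w 0 * P 0 z)"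
    unfolding eq using b1 b2 by (rule order_trans[OF abs_triangle_ineq add_mono])
  also have "\<dots> = \<theta> * (Pn (Suc n) w z - Tn (Suc n) w z)"
    unfolding Eeq by (simp add: E_def algebra_simps)
  finally show ?case .
qed

lemma compare:
  assumes K: "\<And>i. i \<ge> 1 \<Longrightarrow> good (K i)" and w: "w < p" and z: "z < p"
  shows "(1 - \<theta>) * Pn n w z \<le> kprod p K n w z \<and> kprod p K n w z \<le> (1 + \<theta>) * Pn n w z"
proof -
  have a: "\<bar>kprod p K n w z - Pn n w z\<bar> \<le> \<theta> * Pn n w z"
  proof -
    have "\<theta> * (Pn n w z - Tn n w z) \<le> \<theta> * Pn n w z"
      using th Tn_nn[OF z] by (intro mult_left_mono) auto
    then show ?thesis using I2[OF K w z] by (rule order_trans[rotated])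
  qed
  then show ?thesis by (auto simp: abs_le_iff algebra_simps)
qed

end


definition sc :: "nat \<Rightarrow> nat \<Rightarrow> nat" where "sc p y = (if y + 1 = p then 0 else y + 1)"
definition pr :: "nat \<Rightarrow> nat \<Rightarrow> nat" where "pr p y = (if y = 0 then p - 1 else y - 1)"

lemma mod_sc: "y < p \<Longrightarrow> (y + 1) mod p = sc p y"
  by (auto simp: sc_def)
lemma mod_pr: "y < p \<Longrightarrow> (y + p - 1) mod p = pr p y"
proof -
  assume y: "y < p"
  show ?thesis
  proof (cases "y = 0")
    case True then show ?thesis using y by (simp add: pr_def)
  next
    case False
    have e: "y + p - 1 = (y - 1) + p" using False by simp
    have "(y + p - 1) mod p = (y - 1) mod p" unfolding e by simp
    then show ?thesis using y False by (simp add: pr_def)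
  qed
qed

lemma srw_eq: assumes "y < p" shows "srw p y z = (if z = sc p y then 1/2 else 0) + (if z = pr p y then 1/2 else 0)"
proof -
  have a: "(y + 1) mod p = sc p y" and b: "(y + p - 1) mod p = pr p y" using mod_sc mod_pr assms by auto
  show ?thesis unfolding srw_def a b ..
qed

lemma sc_iff: "y < p \<Longrightarrow> z < p \<Longrightarrow> (z = sc p y) = (y = pr p z)"
  by (auto simp: sc_def pr_def)
lemma pr_iff: "y < p \<Longrightarrow> z < p \<Longrightarrow> (z = pr p y) = (y = sc p z)"
  by (auto simp: sc_def pr_def)
lemma sc_lt: "z < p \<Longrightarrow> sc p z < p" by (auto simp: sc_def)
lemma pr_lt: "z < p \<Longrightarrow> pr p z < p" by (auto simp: pr_def)

definition Pab :: "real \<Rightarrow> real \<Rightarrow> nat \<Rightarrow> kernel" where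
  "Pab a b p y z = a * idK y z + b * srw p y z"

definition G :: "real \<Rightarrow> real \<Rightarrow> nat \<Rightarrow> nat \<Rightarrow> real \<Rightarrow> real" where
  "G a b p m d = (1 / real p) * (\<Sum>k<p. cos (2 * pi * real k * d / real p) * (a + b * cos (2 * pi * real k / real p)) ^ m)"

lemma cos_shift_int: "cos (x + 2 * pi * real_of_int n) = cos x"
  by (simp add: cos_add)

lemma G_shift: assumes "0 < p" shows "G a b p m (d + real p) = G a b p m d"
proof -
  have "cos (2 * pi * real k * (d + real p) / real p) = cos (2 * pi * real k * d / real p)" for k
  proof -
    have "2 * pi * real k * (d + real p) / real p = 2 * pi * real k * d / real p + 2 * pi * real_of_int (int k)"
      using assms by (simp add: field_simps)
    then show ?thesis by (simp only: cos_shift_int)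
  qed
  then show ?thesis by (simp add: G_def)
qed

lemma roots_sum:
  fixes d :: int
  assumes "d \<noteq> 0" "\<bar>d\<bar> < int p"
  shows "(\<Sum>k<p. cos (2 * pi * real k * real_of_int d / real p)) = 0"
proof -
  have p: "0 < p" using assms by linarith
  define q where "q = cis (2 * pi * real_of_int d / real p)"
  have q1: "q \<noteq> 1"
  proof
    assume "q = 1"
    then have "cos (2 * pi * real_of_int d / real p) = 1" unfolding q_def
      by (metis cis.sel(1) one_complex.sel(1))
    then obtain n :: int where n: "2 * pi * real_of_int d / real p = real_of_int n * 2 * pi"
      by (auto simp: cos_one_2pi_int)
    then have "real_of_int d = real_of_int n * real p" using p by (simp add: field_simps)
    then have "d = n * int p" by (metis of_int_eq_iff of_int_mult of_int_of_nat_eq)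
    then show False using assms
      by (cases "n = 0") (auto simp: abs_mult dest: mult_le_cancel_right1[THEN iffD1])
  qed
  have qp: "q ^ p = 1"
  proof -
    have "q ^ p = cis (real p * (2 * pi * real_of_int d / real p))" by (simp add: q_def DeMoivre)
    also have "real p * (2 * pi * real_of_int d / real p) = (2 * pi) * real_of_int d" using p by simp
    finally show ?thesis by (simp add: complex_eq_iff)
  qed
  have "(\<Sum>k<p. q ^ k) = 0" using geometric_sum[OF q1, of p] qp by simp
  then have "Re (\<Sum>k<p. q ^ k) = 0" by simp
  moreover have "Re (q ^ k) = cos (2 * pi * real k * real_of_int d / real p)" for k
    by (simp add: q_def DeMoivre) (simp add: algebra_simps)
  ultimately show ?thesis by simp
qed

lemma G_base: assumes "0 < p" "x < p" "z < p" shows "G a b p 0 (real x - real z) = idK x z"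
proof (cases "x = z")
  case True then show ?thesis using assms by (simp add: G_def idK_def)
next
  case False
  define d where "d = int x - int z"
  have "d \<noteq> 0" "\<bar>d\<bar> < int p" using False assms by (auto simp: d_def)
  from roots_sum[OF this] have "(\<Sum>k<p. cos (2 * pi * real k * real_of_int d / real p)) = 0" .
  moreover have "real_of_int d = real x - real z" by (simp add: d_def)
  ultimately show ?thesis using False by (simp add: G_def idK_def)
qed

lemma G_step: "G a b p (Suc m) d = a * G a b p m d + b / 2 * (G a b p m (d + 1) + G a b p m (d - 1))"
proof -
  define c where "c k = 2 * pi * real k / real p" for k
  define u where "u k = 2 * pi * real k * d / real p" for k
  define l where "l k = (a + b * cos (c k))" for k
  have e1: "2 * pi * real k * (d + 1) / real p = u k + c k" for k unfolding u_def c_def by (simp add: distrib_left add_divide_distrib)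
  have e2: "2 * pi * real k * (d - 1) / real p = u k - c k" for k unfolding u_def c_def by (simp add: right_diff_distrib diff_divide_distrib)
  have that_eq: "a * cos (u k) * l k ^ m + b / 2 * (cos (u k + c k) * l k ^ m + cos (u k - c k) * l k ^ m)
        = cos (u k) * l k ^ Suc m" for k
    by (simp add: cos_add cos_diff l_def algebra_simps)
  have g0: "G a b p m d = (1/p) * (\<Sum>k<p. cos (u k) * l k ^ m)" by (simp only: G_def u_def l_def c_def)
  have g1: "G a b p m (d+1) = (1/p) * (\<Sum>k<p. cos (u k + c k) * l k ^ m)" by (simp only: G_def e1 l_def c_def)
  have g2: "G a b p m (d-1) = (1/p) * (\<Sum>k<p. cos (u k - c k) * l k ^ m)" by (simp only: G_def e2 l_def c_def)
  have g3: "G a b p (Suc m) d = (1/p) * (\<Sum>k<p. cos (u k) * l k ^ Suc m)" by (simp only: G_def u_def l_def c_def)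
  have "a * G a b p m d + b / 2 * (G a b p m (d + 1) + G a b p m (d - 1))
     = (1/p) * (\<Sum>k<p. a * cos (u k) * l k ^ m + b / 2 * (cos (u k + c k) * l k ^ m + cos (u k - c k) * l k ^ m))"
    unfolding g0 g1 g2 by (simp add: sum.distrib sum_distrib_left algebra_simps)
  also have "\<dots> = G a b p (Suc m) d" unfolding g3 using that_eq by simp
  finally show ?thesis by simp
qed

lemma sum_ind: "(w::nat) < p \<Longrightarrow> (\<Sum>y<p. f y * (if y = w then c else 0)) = f w * (c::real)"
proof -
  assume w: "w < p"
  have "(\<Sum>y<p. f y * (if y = w then c else 0)) = (\<Sum>y<p. if y = w then f w * c else 0)"
    by (intro sum.cong) auto
  also have "\<dots> = f w * c" using w by (subst sum.delta) (auto simp del: sum.delta)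
  finally show ?thesis .
qed

lemma fourier: assumes p: "0 < p" and x: "x < p"
  shows "z < p \<Longrightarrow> kprod p (\<lambda>_. Pab a b p) m x z = G a b p m (real x - real z)"
proof (induction m arbitrary: z)
  case 0 then show ?case using G_base[OF p x] by simp
next
  case (Suc m)
  let ?g = "\<lambda>y. G a b p m (real x - real y)"
  have "kprod p (\<lambda>_. Pab a b p) (Suc m) x z = (\<Sum>y<p. ?g y * Pab a b p y z)"
    by (simp add: kmult_def Suc.IH)
  also have "\<dots> = (\<Sum>y<p. a * (?g y * (if y = z then 1 else 0)) + b * (?g y * (if y = pr p z then 1/2 else 0)) + b * (?g y * (if y = sc p z then 1/2 else 0)))"
  proof (intro sum.cong refl)
    fix y assume "y \<in> {..<p}"
    then have y: "y < p" by simp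
    have "Pab a b p y z = a * (if y = z then 1 else 0) + b * (if y = pr p z then 1/2 else 0) + b * (if y = sc p z then 1/2 else 0)"
      unfolding Pab_def idK_def srw_eq[OF y] sc_iff[OF y Suc.prems] pr_iff[OF y Suc.prems] by (simp add: algebra_simps)
    then show "?g y * Pab a b p y z = a * (?g y * (if y = z then 1 else 0)) + b * (?g y * (if y = pr p z then 1/2 else 0)) + b * (?g y * (if y = sc p z then 1/2 else 0))"
      by (simp add: algebra_simps)
  qed
  also have "\<dots> = a * ?g z + b * (?g (pr p z) / 2) + b * (?g (sc p z) / 2)"
    using Suc.prems pr_lt sc_lt by (simp add: sum.distrib sum_distrib_left[symmetric] sum_ind)
  also have "?g (pr p z) = G a b p m ((real x - real z) + 1)"
  proof (cases "z = 0")
    case True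
    then have eq: "real x - real (pr p z) = ((real x - real z) + 1) - real p" using p by (simp add: pr_def of_nat_diff)
    have "G a b p m ((real x - real z) + 1 - real p) = G a b p m ((real x - real z) + 1)"
      using G_shift[OF p, of a b m "(real x - real z) + 1 - real p"] by simp
    then show ?thesis unfolding eq .
  next
    case False
    then have "real x - real (pr p z) = real x - real z + 1" by (simp add: pr_def of_nat_diff)
    then show ?thesis by (simp only:)
  qed
  also have "?g (sc p z) = G a b p m ((real x - real z) - 1)"
  proof (cases "z + 1 = p")
    case True
    then have "real x - real (sc p z) = ((real x - real z) - 1) + real p" by (simp add: sc_def)
    then show ?thesis using G_shift[OF p, of a b m "(real x - real z) - 1"] by (simp only:)
  next
    case False
    then have "real x - real (sc p z) = real x - real z - 1" by (simp add: sc_def)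
    then show ?thesis by (simp only:)
  qed
  finally show ?case by (simp add: G_step algebra_simps)
qed


lemma sin_lower: fixes y :: real assumes "0 \<le> y" "y \<le> 2" shows "y / 3 \<le> sin y"
proof -
  have "\<bar>sin y - (\<Sum>m<3. sin_coeff m * y ^ m)\<bar> \<le> inverse (fact 3) * \<bar>y\<bar> ^ 3"
    by (rule Maclaurin_sin_bound)
  moreover have "(\<Sum>m<3. sin_coeff m * y ^ m) = y"
    by (simp add: eval_nat_numeral sin_coeff_def)
  moreover have "inverse (fact 3 :: real) = 1 / 6" by (simp add: eval_nat_numeral)
  moreover have "\<bar>y\<bar> ^ 3 = y ^ 3" using assms by simp
  ultimately have "\<bar>sin y - y\<bar> \<le> y ^ 3 / 6" by simp
  then have "sin y \<ge> y - y ^ 3 / 6" using abs_ge_minus_self[of "sin y - y"] by linarith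
  moreover have "y ^ 3 / 6 \<le> y * 2 / 3"
  proof -
    have "y * y \<le> 2 * 2" using assms by (intro mult_mono) auto
    then have "y ^ 2 \<le> 4" by (simp add: power2_eq_square)
    then have "y * y ^ 2 \<le> y * 4" using assms by (intro mult_left_mono) auto
    then show ?thesis by (simp add: power3_eq_cube power2_eq_square algebra_simps)
  qed
  ultimately show ?thesis by simp
qed

lemma cos_upper: assumes "0 \<le> x" "x \<le> pi" shows "cos x \<le> 1 - x ^ 2 / 18"
proof -
  have y: "0 \<le> x / 2" "x / 2 \<le> 2" using assms pi_less_4 by auto
  have s: "x / 6 \<le> sin (x / 2)" using sin_lower[OF y] by simp
  have "(x / 6) ^ 2 \<le> sin (x / 2) ^ 2" using s assms by (intro power_mono) auto
  moreover have "cos x = 1 - 2 * sin (x / 2) ^ 2" using cos_double_sin[of "x/2"] by simp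
  ultimately show ?thesis by (simp add: power2_eq_square)
qed

lemma cos_exp: assumes "0 \<le> x" "x \<le> pi" shows "cos x \<le> exp (- (x ^ 2 / 18))"
  using cos_upper[OF assms] exp_ge_add_one_self[of "- (x ^ 2 / 18)"] by linarith

lemma abs_cos_bound: assumes "0 \<le> x" "x \<le> pi" and m: "True"
  shows "\<bar>cos x\<bar> ^ m \<le> exp (- (x ^ 2 / 18)) ^ m + exp (- ((pi - x) ^ 2 / 18)) ^ m"
proof (cases "0 \<le> cos x")
  case True
  then have "\<bar>cos x\<bar> ^ m \<le> exp (- (x ^ 2 / 18)) ^ m" using cos_exp[OF assms(1,2)] by (intro power_mono) auto
  moreover have "0 \<le> exp (- ((pi - x) ^ 2 / 18)) ^ m" by simp
  ultimately show ?thesis by linarith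
next
  case False
  then have "\<bar>cos x\<bar> = cos (pi - x)" by simp
  also have "\<dots> \<le> exp (- ((pi - x) ^ 2 / 18))" using assms by (intro cos_exp) auto
  finally have "\<bar>cos x\<bar> ^ m \<le> exp (- ((pi - x) ^ 2 / 18)) ^ m" by (intro power_mono) auto
  moreover have "0 \<le> exp (- (x ^ 2 / 18)) ^ m" by simp
  ultimately show ?thesis by linarith
qed

lemma exp_pow_le: assumes "real k * c \<le> real m * a" shows "exp (- a) ^ m \<le> exp (- c) ^ k"
proof -
  have "exp (- a) ^ m = exp (- (real m * a))" by (simp add: exp_of_nat_mult[symmetric])
  also have "\<dots> \<le> exp (- (real k * c))" using assms by simp
  also have "\<dots> = exp (- c) ^ k" by (simp add: exp_of_nat_mult[symmetric])
  finally show ?thesis .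
qed

lemma geo_partial: "0 \<le> r \<Longrightarrow> r < 1 \<Longrightarrow> (\<Sum>j\<in>{1..M}. r ^ j) \<le> r / (1 - (r::real))"
proof -
  assume r: "0 \<le> r" "r < 1"
  have "(\<Sum>j\<in>{1..M}. r ^ j) * (1 - r) = r - r ^ Suc M"
  proof (induction M)
    case 0 then show ?case by simp
  next
    case (Suc M)
    have e: "(\<Sum>j\<in>{1..Suc M}. r ^ j) = (\<Sum>j\<in>{1..M}. r ^ j) + r ^ Suc M" by simp
    have "((\<Sum>j\<in>{1..M}. r ^ j) + r ^ Suc M) * (1 - r) = (\<Sum>j\<in>{1..M}. r ^ j) * (1 - r) + r ^ Suc M - r ^ Suc (Suc M)"
      by (simp add: algebra_simps)
    then show ?case unfolding e Suc.IH by simp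
  qed
  moreover have "0 \<le> r ^ Suc M" using r by simp
  ultimately have "(\<Sum>j\<in>{1..M}. r ^ j) * (1 - r) \<le> r" by simp
  then show ?thesis using r by (simp add: field_simps)
qed

lemma geo_inj:
  assumes "finite A" "inj_on h A" "\<And>k. k \<in> A \<Longrightarrow> 1 \<le> h k" "0 \<le> r" "r < (1::real)"
  shows "(\<Sum>k\<in>A. r ^ h k) \<le> r / (1 - r)"
proof -
  have "finite (h ` A)" using assms(1) by simp
  then obtain M where "\<forall>n\<in>h ` A. n \<le> M" using finite_nat_set_iff_bounded_le by blast
  then have M: "h ` A \<subseteq> {..M}" by auto
  have sub: "h ` A \<subseteq> {1..M}" using M assms(3) by auto
  have "(\<Sum>k\<in>A. r ^ h k) = (\<Sum>j\<in>h ` A. r ^ j)" by (simp add: sum.reindex[OF assms(2)])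
  also have "\<dots> \<le> (\<Sum>j\<in>{1..M}. r ^ j)" using sub assms(4) by (intro sum_mono2) simp_all
  also have "\<dots> \<le> r / (1 - r)" using geo_partial[OF assms(4,5)] .
  finally show ?thesis .
qed

lemma sym_sum:
  fixes f h :: "nat \<Rightarrow> real"
  assumes Np: "N < p" "p \<le> 2 * N + 1"
    and fs: "\<And>k. 1 \<le> k \<Longrightarrow> k < p \<Longrightarrow> f k = f (p - k)"
    and fh: "\<And>k. 1 \<le> k \<Longrightarrow> k \<le> N \<Longrightarrow> f k \<le> h k"
    and fn: "\<And>k. 0 \<le> f k"
  shows "(\<Sum>k\<in>{1..<p}. f k) \<le> 2 * (\<Sum>k\<in>{1..N}. h k)"
proof -
  define h' where "h' j = (if 1 \<le> j \<and> j \<le> N then h j else 0)" for j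
  have h'n: "0 \<le> h' j" for j
  proof (cases "1 \<le> j \<and> j \<le> N")
    case True then show ?thesis using fh[of j] fn[of j] by (simp add: h'_def)
  next
    case False then show ?thesis by (auto simp: h'_def)
  qed
  have b: "f k \<le> h' k + h' (p - k)" if "k \<in> {1..<p}" for k
  proof (cases "k \<le> N")
    case True
    have "h' k = h k" using True that by (simp add: h'_def)
    then show ?thesis using that True fh[of k] h'n[of "p-k"] by simp
  next
    case False
    then have a: "1 \<le> p - k" "p - k \<le> N" using that Np by auto
    have "h' (p - k) = h (p - k)" using a by (simp add: h'_def)
    moreover have "f k = f (p - k)" using that fs[of k] by simp
    ultimately show ?thesis using a fh[of "p-k"] h'n[of k] by simp
  qed
  have 1: "(\<Sum>k\<in>{1..<p}. f k) \<le> (\<Sum>k\<in>{1..<p}. h' k + h' (p - k))" using b by (intro sum_mono) blast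
  have 2: "(\<Sum>k\<in>{1..<p}. h' (p - k)) = (\<Sum>k\<in>{1..<p}. h' k)"
    by (rule sum.reindex_bij_witness[of _ "\<lambda>k. p - k" "\<lambda>k. p - k"]) auto
  have 3: "(\<Sum>k\<in>{1..<p}. h' k) = (\<Sum>k\<in>{1..N}. h' k)"
    using Np by (intro sum.mono_neutral_right) (auto simp: h'_def)
  have 4: "(\<Sum>k\<in>{1..N}. h' k) = (\<Sum>k\<in>{1..N}. h k)" by (intro sum.cong) (auto simp: h'_def)
  show ?thesis using 1 2 3 4 by (simp add: sum.distrib)
qed


lemma sum_split0: "0 < (p::nat) \<Longrightarrow> (\<Sum>k<p. f k) = f 0 + (\<Sum>k\<in>{1..<p}. f k :: real)"
proof -
  assume p: "0 < p"
  have "{..<p} = insert 0 {1..<p}" using p by (auto simp: not_le)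
  then show ?thesis by simp
qed

lemma G_close: assumes p: "0 < p" and ab: "a + b = 1"
  shows "\<bar>G a b p m d - 1 / real p\<bar> \<le> (1 / real p) * (\<Sum>k\<in>{1..<p}. \<bar>a + b * cos (2 * pi * real k / real p)\<bar> ^ m)"
proof -
  have "G a b p m d = (1 / real p) * (1 + (\<Sum>k\<in>{1..<p}. cos (2 * pi * real k * d / real p) * (a + b * cos (2 * pi * real k / real p)) ^ m))"
    unfolding G_def using sum_split0[OF p] ab by simp
  then have "G a b p m d - 1 / real p = (1 / real p) * (\<Sum>k\<in>{1..<p}. cos (2 * pi * real k * d / real p) * (a + b * cos (2 * pi * real k / real p)) ^ m)"
    by (simp add: algebra_simps)
  moreover have "\<bar>\<Sum>k\<in>{1..<p}. cos (2 * pi * real k * d / real p) * (a + b * cos (2 * pi * real k / real p)) ^ m\<bar>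
      \<le> (\<Sum>k\<in>{1..<p}. \<bar>a + b * cos (2 * pi * real k / real p)\<bar> ^ m)"
  proof (rule order_trans[OF sum_abs], rule sum_mono)
    fix k
    have "\<bar>cos (2 * pi * real k * d / real p)\<bar> \<le> 1" by simp
    then show "\<bar>cos (2 * pi * real k * d / real p) * (a + b * cos (2 * pi * real k / real p)) ^ m\<bar> \<le> \<bar>a + b * cos (2 * pi * real k / real p)\<bar> ^ m"
      by (simp add: abs_mult power_abs mult_left_le_one_le)
  qed
  ultimately show ?thesis using p by (simp add: abs_mult divide_right_mono)
qed

lemma angle: assumes "1 \<le> j" "0 < p"
  shows "real j * (real m / (10 * real p ^ 2)) \<le> real m * (pi * real j / real p) ^ 2 / 36"
proof -
  have "2 * 2 \<le> pi * pi" using pi_ge_two by (intro mult_mono) auto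
  then have pi2: "4 \<le> pi ^ 2" by (simp add: power2_eq_square)
  have jj: "real j \<le> real j ^ 2" using assms by (simp add: power2_eq_square)
  have "(pi * real j / real p) ^ 2 = pi ^ 2 * real j ^ 2 / real p ^ 2" by (simp add: power_divide power_mult_distrib)
  moreover have "4 * real j \<le> pi ^ 2 * real j ^ 2" using pi2 jj by (intro mult_mono) auto
  ultimately have "4 * real j / real p ^ 2 \<le> (pi * real j / real p) ^ 2" using assms by (simp add: divide_right_mono)
  then have "real m * (4 * real j / real p ^ 2) \<le> real m * (pi * real j / real p) ^ 2" by (intro mult_left_mono) auto
  moreover have "real j * (real m / (10 * real p ^ 2)) * 36 \<le> real m * (4 * real j / real p ^ 2)"
    using assms by (simp add: field_simps)
  ultimately show ?thesis by linarith
qed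

lemma exp4: "exp (- c) \<le> 1 / 16" if "4 \<le> c" for c :: real
proof -
  have "2 \<le> exp (1::real)" using exp_ge_add_one_self[of 1] by simp
  then have "2 ^ 4 \<le> exp (1::real) ^ 4" by (intro power_mono) auto
  also have "\<dots> = exp 4" by (simp add: exp_of_nat_mult[symmetric])
  also have "\<dots> \<le> exp c" using that by simp
  finally have "16 \<le> exp c" by simp
  then show ?thesis by (simp add: exp_minus field_simps)
qed

lemma cos_sym: assumes "k < p" shows "cos (2 * pi * real (p - k) / real p) = cos (2 * pi * real k / real p)"
proof (cases "p = 0")
  case True then show ?thesis using assms by simp
next
  case False
  then have "2 * pi * real (p - k) / real p = 2 * pi - 2 * pi * real k / real p"
    using assms by (simp add: of_nat_diff field_simps)
  then show ?thesis by (simp add: cos_diff)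
qed

lemma th_range: assumes "2 * k \<le> p" "0 < p"
  shows "0 \<le> pi * real (2 * k) / real p" "pi * real (2 * k) / real p \<le> pi"
proof -
  have "real (2 * k) / real p \<le> 1" using assms by (simp add: divide_le_eq)
  then have "pi * (real (2 * k) / real p) \<le> pi * 1" by (intro mult_left_mono) auto
  then show "pi * real (2 * k) / real p \<le> pi" by simp
qed simp

lemma spec_odd: assumes N: "1 \<le> N" and p: "p = 2 * N + 1" and m: "360 * N ^ 2 \<le> m"
  shows "(\<Sum>k\<in>{1..<p}. \<bar>cos (2 * pi * real k / real p)\<bar> ^ m) \<le> 1 / 2"
proof -
  define c where "c = real m / (10 * real p ^ 2)"
  define r where "r = exp (- c)"
  have pp: "0 < p" using p by simp
  have "real p ^ 2 \<le> 9 * real N ^ 2"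
  proof -
    have "real p \<le> 3 * real N" using p N by simp
    then have "real p ^ 2 \<le> (3 * real N) ^ 2" by (intro power_mono) auto
    then show ?thesis by (simp add: power_mult_distrib)
  qed
  moreover have "360 * real N ^ 2 \<le> real m" using m by (metis of_nat_le_iff of_nat_mult of_nat_numeral of_nat_power)
  ultimately have c4: "4 \<le> c" unfolding c_def using pp by (simp add: field_simps)
  have r0: "0 \<le> r" "r < 1" and r16: "r \<le> 1/16" using c4 exp4[OF c4] by (auto simp: r_def)
  define h where "h k = r ^ (2 * k) + r ^ (p - 2 * k)" for k
  have fh: "\<bar>cos (2 * pi * real k / real p)\<bar> ^ m \<le> h k" if k: "1 \<le> k" "k \<le> N" for k
  proof -
    define th where "th = pi * real (2 * k) / real p"
    have eth: "2 * pi * real k / real p = th" by (simp add: th_def)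
    have th0: "0 \<le> th" "th \<le> pi" unfolding th_def by (rule th_range; use k p pp in simp)+
    have pth: "pi - th = pi * real (p - 2 * k) / real p" using k p by (simp add: th_def of_nat_diff field_simps)
    have "exp (- (th ^ 2 / 18)) ^ m \<le> exp (- c) ^ (2 * k)"
    proof (rule exp_pow_le)
      have "real (2 * k) * c \<le> real m * th ^ 2 / 36" unfolding c_def th_def by (rule angle) (use k pp in auto)
      also have "\<dots> \<le> real m * (th ^ 2 / 18)" by (simp add: divide_left_mono)
      finally show "real (2 * k) * c \<le> real m * (th ^ 2 / 18)" .
    qed
    moreover have "exp (- ((pi - th) ^ 2 / 18)) ^ m \<le> exp (- c) ^ (p - 2 * k)"
    proof (rule exp_pow_le)
      have "real (p - 2 * k) * c \<le> real m * (pi - th) ^ 2 / 36" unfolding c_def pth by (rule angle) (use k p pp in auto)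
      also have "\<dots> \<le> real m * ((pi - th) ^ 2 / 18)" by (simp add: divide_left_mono)
      finally show "real (p - 2 * k) * c \<le> real m * ((pi - th) ^ 2 / 18)" .
    qed
    ultimately show ?thesis using abs_cos_bound[OF th0 TrueI, of m] unfolding eth h_def r_def by linarith
  qed
  have "(\<Sum>k\<in>{1..<p}. \<bar>cos (2 * pi * real k / real p)\<bar> ^ m) \<le> 2 * (\<Sum>k\<in>{1..N}. h k)"
  proof (rule sym_sum[where N=N])
    fix k assume "1 \<le> k" "k < p"
    then show "\<bar>cos (2 * pi * real k / real p)\<bar> ^ m = \<bar>cos (2 * pi * real (p - k) / real p)\<bar> ^ m"
      using cos_sym[of k p] by simp
  qed (use p fh in auto)
  also have "(\<Sum>k\<in>{1..N}. h k) = (\<Sum>k\<in>{1..N}. r ^ (2 * k)) + (\<Sum>k\<in>{1..N}. r ^ (p - 2 * k))"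
    by (simp add: h_def sum.distrib)
  also have "(\<Sum>k\<in>{1..N}. r ^ (2 * k)) \<le> r / (1 - r)"
    by (rule geo_inj) (use r0 in \<open>auto simp: inj_on_def\<close>)
  also have "(\<Sum>k\<in>{1..N}. r ^ (p - 2 * k)) \<le> r / (1 - r)"
    by (rule geo_inj) (use r0 p in \<open>auto simp: inj_on_def\<close>)
  also have "2 * (r / (1 - r) + r / (1 - r)) \<le> 1 / 2"
  proof -
    have "r / (1 - r) \<le> 1 / 8" using r0 r16 by (simp add: divide_le_eq)
    moreover have "x \<le> 1 / 8 \<Longrightarrow> 2 * (x + x) \<le> (1 / 2 :: real)" for x by simp
    ultimately show ?thesis by blast
  qed
  finally show ?thesis by simp
qed

lemma spec_lazy: assumes N: "1 \<le> N" and p: "p = 2 * N" and m: "360 * N ^ 2 \<le> m"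
  shows "(\<Sum>k\<in>{1..<p}. \<bar>1/2 + 1/2 * cos (2 * pi * real k / real p)\<bar> ^ m) \<le> 1 / 2"
proof -
  define c where "c = real m / (10 * real p ^ 2)"
  define r where "r = exp (- c)"
  have pp: "0 < p" using p N by simp
  have "real p ^ 2 = 4 * real N ^ 2" using p by (simp add: power_mult_distrib)
  moreover have "360 * real N ^ 2 \<le> real m" using m by (metis of_nat_le_iff of_nat_mult of_nat_numeral of_nat_power)
  moreover have "0 < real N ^ 2" using N by simp
  ultimately have c4: "4 \<le> c" unfolding c_def using pp by (simp add: field_simps)
  have r0: "0 \<le> r" "r < 1" and r16: "r \<le> 1/16" using c4 exp4[OF c4] by (auto simp: r_def)
  define h where "h k = r ^ (2 * k)" for k
  have fh: "\<bar>1/2 + 1/2 * cos (2 * pi * real k / real p)\<bar> ^ m \<le> h k" if k: "1 \<le> k" "k \<le> N" for k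
  proof -
    define th where "th = pi * real (2 * k) / real p"
    have eth: "2 * pi * real k / real p = th" by (simp add: th_def)
    have th0: "0 \<le> th" "th \<le> pi" unfolding th_def by (rule th_range; use k p pp in simp)+
    have l0: "0 \<le> 1/2 + 1/2 * cos th" using cos_ge_minus_one[of th] by linarith
    have "1/2 + 1/2 * cos th \<le> 1 - th ^ 2 / 36" using cos_upper[OF th0] by simp
    also have "\<dots> \<le> exp (- (th ^ 2 / 36))" using exp_ge_add_one_self[of "- (th ^ 2 / 36)"] by simp
    finally have "\<bar>1/2 + 1/2 * cos th\<bar> ^ m \<le> exp (- (th ^ 2 / 36)) ^ m" using l0 by (intro power_mono) auto
    also have "\<dots> \<le> exp (- c) ^ (2 * k)"
    proof (rule exp_pow_le)
      have "real (2 * k) * c \<le> real m * th ^ 2 / 36" unfolding c_def th_def by (rule angle) (use k pp in auto)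
      then show "real (2 * k) * c \<le> real m * (th ^ 2 / 36)" by simp
    qed
    finally show ?thesis unfolding eth h_def r_def .
  qed
  have "(\<Sum>k\<in>{1..<p}. \<bar>1/2 + 1/2 * cos (2 * pi * real k / real p)\<bar> ^ m) \<le> 2 * (\<Sum>k\<in>{1..N}. h k)"
  proof (rule sym_sum[where N=N])
    fix k assume "1 \<le> k" "k < p"
    then show "\<bar>1/2 + 1/2 * cos (2 * pi * real k / real p)\<bar> ^ m = \<bar>1/2 + 1/2 * cos (2 * pi * real (p - k) / real p)\<bar> ^ m"
      using cos_sym[of k p] by simp
  qed (use p N fh in auto)
  also have "(\<Sum>k\<in>{1..N}. h k) \<le> r / (1 - r)"
    unfolding h_def by (rule geo_inj) (use r0 in \<open>auto simp: inj_on_def\<close>)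
  also have "2 * (r / (1 - r)) \<le> 1 / 2"
  proof -
    have "r / (1 - r) \<le> 1 / 8" using r0 r16 by (simp add: divide_le_eq)
    moreover have "x \<le> 1 / 8 \<Longrightarrow> 2 * x \<le> (1 / 2 :: real)" for x by simp
    ultimately show ?thesis by blast
  qed
  finally show ?thesis by simp
qed


locale core = cmp +
  fixes L :: nat
  assumes th1: "\<theta> < 1"
    and P_row: "\<And>y. y < p \<Longrightarrow> (\<Sum>z<p. P y z) = 1"
    and L1: "1 \<le> L"
    and Pb: "\<And>m x z. L \<le> m \<Longrightarrow> x < p \<Longrightarrow> z < p \<Longrightarrow> 1 / (2 * real p) \<le> Pn m x z \<and> Pn m x z \<le> 3 / (2 * real p)"
begin

lemma good_nn: "good Q \<Longrightarrow> y < p \<Longrightarrow> z < p \<Longrightarrow> 0 \<le> Q y z"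
proof -
  assume g: "good Q" and y: "y < p" and z: "z < p"
  show ?thesis
  proof (cases "y = 0")
    case True
    have "0 \<le> (1 - \<theta>) * P 0 z" using th1 P_nn[of 0 z] z p_pos by simp
    then show ?thesis using g z True unfolding good_def by (meson order_trans)
  next
    case False then show ?thesis using g y z P_nn unfolding good_def by auto
  qed
qed

lemma good_row: "good Q \<Longrightarrow> y < p \<Longrightarrow> (\<Sum>z<p. Q y z) = 1"
proof -
  assume g: "good Q" and y: "y < p"
  show ?thesis
  proof (cases "y = 0")
    case False
    then have "(\<Sum>z<p. Q y z) = (\<Sum>z<p. P y z)" using g y unfolding good_def by (intro sum.cong) auto
    then show ?thesis using P_row y by simp
  next
    case True
    have "2 * (\<Sum>z<p. Q 0 z) = (\<Sum>z<p. Q 0 z + Q 0 (rf p z))"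
      using sum_rf[OF p_pos, of "Q 0"] by (simp add: sum.distrib)
    also have "\<dots> = (\<Sum>z<p. P 0 z + P 0 (rf p z))" using g unfolding good_def by (intro sum.cong) auto
    also have "\<dots> = 2 * (\<Sum>z<p. P 0 z)" using sum_rf[OF p_pos, of "P 0"] by (simp add: sum.distrib)
    finally show ?thesis using P_row[of 0] p_pos True by simp
  qed
qed

definition "\<alpha> = (1 - \<theta>) / 2"
definition "R = 3 * (1 + \<theta>) / (1 - \<theta>) - 1"

lemma alpha: "0 < \<alpha>" "\<alpha> \<le> 1" using th th1 by (auto simp: \<alpha>_def)
lemma R0: "0 \<le> R"
proof -
  have "1 \<le> 3 * (1 + \<theta>) / (1 - \<theta>)" using th th1 by (simp add: le_divide_eq)
  then show ?thesis by (simp add: R_def)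
qed

lemma iter:
  assumes K: "\<And>i. i \<ge> 1 \<Longrightarrow> good (K i)" and s: "L \<le> s" and z: "z < p"
  shows "\<exists>lo hi. 0 < lo \<and> (\<forall>u<p. lo \<le> kprod p K (j * L + s) u z \<and> kprod p K (j * L + s) u z \<le> hi)
            \<and> hi - lo \<le> (1 - \<alpha>) ^ j * R * lo"
  using K
proof (induction j arbitrary: K)
  case 0
  define lo where "lo = (1 - \<theta>) / (2 * real p)"
  define hi where "hi = (1 + \<theta>) * (3 / (2 * real p))"
  have "lo \<le> kprod p K s u z \<and> kprod p K s u z \<le> hi" if u: "u < p" for u
  proof -
    have c: "(1 - \<theta>) * Pn s u z \<le> kprod p K s u z \<and> kprod p K s u z \<le> (1 + \<theta>) * Pn s u z"
      by (rule compare[OF 0 u z])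
    have b: "1 / (2 * real p) \<le> Pn s u z" "Pn s u z \<le> 3 / (2 * real p)" using Pb[OF s u z] by auto
    have "(1 - \<theta>) * (1 / (2 * real p)) \<le> (1 - \<theta>) * Pn s u z" using b th1 by (intro mult_left_mono) auto
    then have "lo \<le> (1 - \<theta>) * Pn s u z" unfolding lo_def by simp
    moreover have "(1 + \<theta>) * Pn s u z \<le> hi" unfolding hi_def using b th by (intro mult_left_mono) auto
    ultimately show ?thesis using c by linarith
  qed
  moreover have "0 < lo" using th1 p_pos by (simp add: lo_def)
  moreover have "hi - lo \<le> (1 - \<alpha>) ^ 0 * R * lo"
    using th1 p_pos by (simp add: lo_def hi_def R_def field_simps)
  ultimately show ?case by auto
next
  case (Suc j)
  define K' where "K' = (\<lambda>i. K (L + i))"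
  have K': "\<And>i. i \<ge> 1 \<Longrightarrow> good (K' i)" using Suc.prems by (simp add: K'_def)
  obtain lo hi where lo: "0 < lo" and bd: "\<And>u. u < p \<Longrightarrow> lo \<le> kprod p K' (j * L + s) u z \<and> kprod p K' (j * L + s) u z \<le> hi"
    and dif: "hi - lo \<le> (1 - \<alpha>) ^ j * R * lo"
    using Suc.IH[where K=K'] K' by blast
  define g where "g y = kprod p K' (j * L + s) y z" for y
  define B where "B = kprod p K L"
  have split: "kprod p K (Suc j * L + s) u z = (\<Sum>y<p. B u y * g y)" for u
  proof -
    have "kprod p K (Suc j * L + s) u z = kprod p K (L + (j * L + s)) u z" by (simp add: algebra_simps)
    also have "\<dots> = kmult p (kprod p K L) (kprod p (\<lambda>i. K (L + i)) (j * L + s)) u z" by (rule kprod_split[OF z])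
    finally show ?thesis by (simp add: kmult_def B_def g_def K'_def)
  qed
  have Blow: "\<alpha> / real p \<le> B u y" if "u < p" "y < p" for u y
  proof -
    have "(1 - \<theta>) * Pn L u y \<le> B u y" using compare[OF Suc.prems that] by (simp add: B_def)
    moreover have "1 / (2 * real p) \<le> Pn L u y" using Pb[of L u y] that by simp
    then have "(1 - \<theta>) * (1 / (2 * real p)) \<le> (1 - \<theta>) * Pn L u y" using th1 by (intro mult_left_mono) auto
    ultimately show ?thesis by (simp add: \<alpha>_def)
  qed
  have Brow: "(\<Sum>y<p. B u y) = 1" if "u < p" for u
    unfolding B_def by (rule kprod_rowsum[OF _ that]) (use good_row Suc.prems in auto)
  define S where "S = \<alpha> / real p * (\<Sum>y<p. g y)"
  define lo' where "lo' = S + (1 - \<alpha>) * lo"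
  define hi' where "hi' = S + (1 - \<alpha>) * hi"
  have gb: "lo \<le> g y" "g y \<le> hi" if "y < p" for y using bd[OF that] by (auto simp: g_def)
  have main: "lo' \<le> (\<Sum>y<p. B u y * g y) \<and> (\<Sum>y<p. B u y * g y) \<le> hi'" if u: "u < p" for u
  proof -
    define w where "w y = B u y - \<alpha> / real p" for y
    have w0: "0 \<le> w y" if "y < p" for y using Blow[OF u that] by (simp add: w_def)
    have ws: "(\<Sum>y<p. w y) = 1 - \<alpha>" using Brow[OF u] p_pos by (simp add: w_def sum_subtractf)
    have eq: "(\<Sum>y<p. B u y * g y) = S + (\<Sum>y<p. w y * g y)"
      by (simp add: S_def w_def algebra_simps sum.distrib sum_distrib_left sum_subtractf sum_divide_distrib[symmetric])
    have "(\<Sum>y<p. w y * lo) \<le> (\<Sum>y<p. w y * g y)" using w0 gb by (intro sum_mono mult_left_mono) auto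
    moreover have "(\<Sum>y<p. w y * g y) \<le> (\<Sum>y<p. w y * hi)" using w0 gb by (intro sum_mono mult_left_mono) auto
    moreover have "(\<Sum>y<p. w y * lo) = (1 - \<alpha>) * lo" using ws by (simp add: sum_distrib_right[symmetric])
    moreover have "(\<Sum>y<p. w y * hi) = (1 - \<alpha>) * hi" using ws by (simp add: sum_distrib_right[symmetric])
    ultimately show ?thesis unfolding eq lo'_def hi'_def by linarith
  qed
  have "\<alpha> * lo \<le> S"
  proof -
    have "(\<Sum>y<p. lo) \<le> (\<Sum>y<p. g y)" using gb by (intro sum_mono) auto
    then have "real p * lo \<le> (\<Sum>y<p. g y)" by simp
    then have "\<alpha> / real p * (real p * lo) \<le> S" unfolding S_def using alpha by (intro mult_left_mono) auto
    then show ?thesis using p_pos by simp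
  qed
  then have lolo: "lo \<le> lo'" unfolding lo'_def by (simp add: algebra_simps)
  have "hi' - lo' = (1 - \<alpha>) * (hi - lo)" by (simp add: hi'_def lo'_def algebra_simps)
  also have "\<dots> \<le> (1 - \<alpha>) * ((1 - \<alpha>) ^ j * R * lo)" using dif alpha by (intro mult_left_mono) auto
  also have "\<dots> \<le> (1 - \<alpha>) * ((1 - \<alpha>) ^ j * R * lo')"
    using lolo alpha R0 by (intro mult_left_mono) auto
  also have "\<dots> = (1 - \<alpha>) ^ Suc j * R * lo'" by simp
  finally have "hi' - lo' \<le> (1 - \<alpha>) ^ Suc j * R * lo'" .
  moreover have "0 < lo'" using lolo lo by simp
  ultimately show ?case using main split by metis
qed

end


lemma rf_eq: "y < p \<Longrightarrow> rf p y = (if y = 0 then 0 else p - y)"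
  by (auto simp: rf_def)

lemma rf_sc: assumes "3 \<le> p" "y < p" "z < p" shows "(rf p z = sc p (rf p y)) = (z = pr p y)"
  using assms by (cases "y = 0"; cases "z = 0") (auto simp: rf_eq sc_def pr_def)
lemma rf_pr: assumes "3 \<le> p" "y < p" "z < p" shows "(rf p z = pr p (rf p y)) = (z = sc p y)"
  using assms by (cases "y = 0"; cases "z = 0") (auto simp: rf_eq sc_def pr_def)

lemma srw_sym: assumes p: "3 \<le> p" and y: "y < p" and z: "z < p"
  shows "srw p (rf p y) (rf p z) = srw p y z"
proof -
  have ry: "rf p y < p" using p by (simp add: rf_lt)
  show ?thesis unfolding srw_eq[OF ry] srw_eq[OF y] rf_sc[OF p y z] rf_pr[OF p y z] by simp
qed

lemma srw_nn: "0 \<le> srw p y z" by (simp add: srw_def)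

lemma srw_row: assumes p: "3 \<le> p" and y: "y < p" shows "(\<Sum>z<p. srw p y z) = 1"
proof -
  have "(\<Sum>z<p. srw p y z) = (\<Sum>z<p. (if z = sc p y then 1/2 else 0)) + (\<Sum>z<p. (if z = pr p y then 1/2 else 0))"
    by (simp add: srw_eq[OF y] sum.distrib)
  also have "\<dots> = 1" using sc_lt[OF y] pr_lt[OF y] by simp
  finally show ?thesis .
qed

lemma idK_sym: "y < p \<Longrightarrow> z < p \<Longrightarrow> idK (rf p y) (rf p z) = idK y z"
  by (auto simp: idK_def rf_eq split: if_splits)

definition Plz :: "nat \<Rightarrow> kernel" where "Plz p y z = (idK y z + srw p y z) / 2"

lemma Delta0: assumes p: "3 \<le> p" shows "Delta p d 0 z = (if z = 1 then d else 0) - (if z = p - 1 then d else 0)"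
  using p by (simp add: Delta_def)

lemma Delta_pos: "0 < y \<Longrightarrow> Delta p d y z = 0" by (simp add: Delta_def)

lemma srw0: assumes p: "3 \<le> p" and z: "z < p"
  shows "srw p 0 z = (if z = 1 then 1/2 else 0) + (if z = p - 1 then 1/2 else 0)"
  using p srw_eq[of 0 p z] by (simp add: sc_def pr_def)

lemma rf_1: "3 \<le> p \<Longrightarrow> z < p \<Longrightarrow> (rf p z = 1) = (z = p - 1)"
  by (auto simp: rf_eq)
lemma rf_pm1: "3 \<le> p \<Longrightarrow> z < p \<Longrightarrow> (rf p z = p - 1) = (z = 1)"
  by (auto simp: rf_eq)

lemma cmp_srw: "3 \<le> p \<Longrightarrow> 0 \<le> \<theta> \<Longrightarrow> cmp p (srw p) \<theta>"
  by (rule cmp.intro) (auto simp: srw_nn srw_sym)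

lemma cmp_lazy: "3 \<le> p \<Longrightarrow> 0 \<le> \<theta> \<Longrightarrow> cmp p (Plz p) \<theta>"
  by (rule cmp.intro) (auto simp: Plz_def srw_nn idK_def srw_sym idK_sym[simplified idK_def])

lemma Qd_good: assumes p: "3 \<le> p" and e: "0 \<le> \<epsilon>" and d: "-\<epsilon> \<le> d" "d \<le> \<epsilon>"
  shows "cmp.good p (srw p) (2 * \<epsilon>) (Qd p d)"
proof -
  have c: "cmp p (srw p) (2 * \<epsilon>)" using cmp_srw p e by simp
  show ?thesis unfolding cmp.good_def[OF c]
proof (intro conjI allI impI)
  show "Qd p d y z = srw p y z" if "0 < y" for y z using that by (simp add: Qd_def Delta_pos)
  fix z assume z: "z < p"
  have ne: "(1::nat) \<noteq> p - 1" using p by simp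
  have eq: "Qd p d 0 z = (if z = 1 then 1/2 + d else if z = p - 1 then 1/2 - d else 0)"
    "srw p 0 z = (if z = 1 then 1/2 else if z = p - 1 then 1/2 else 0)"
    using ne unfolding Qd_def srw0[OF p z] Delta0[OF p] by auto
  show "(1 - 2 * \<epsilon>) * srw p 0 z \<le> Qd p d 0 z"
    unfolding eq using d by (cases "z = 1"; cases "z = p - 1") auto
  show "Qd p d 0 z \<le> (1 + 2 * \<epsilon>) * srw p 0 z"
    unfolding eq using d by (cases "z = 1"; cases "z = p - 1") auto
  have rz: "rf p z < p" using p by (simp add: rf_lt)
  have eq2: "Qd p d 0 (rf p z) = (if z = p - 1 then 1/2 + d else if z = 1 then 1/2 - d else 0)"
    "srw p 0 (rf p z) = (if z = p - 1 then 1/2 else if z = 1 then 1/2 else 0)"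
    using ne unfolding Qd_def srw0[OF p rz] Delta0[OF p] rf_1[OF p z] rf_pm1[OF p z] by auto
  show "Qd p d 0 z + Qd p d 0 (rf p z) = srw p 0 z + srw p 0 (rf p z)"
    unfolding eq eq2 using ne by auto
qed
qed

lemma Qlazy_good: assumes p: "3 \<le> p" and e: "0 \<le> \<epsilon>" and d: "-\<epsilon> \<le> d" "d \<le> \<epsilon>"
  shows "cmp.good p (Plz p) (2 * \<epsilon>) (\<lambda>x y. (idK x y + Qd p d x y) / 2)"
proof -
  have c: "cmp p (Plz p) (2 * \<epsilon>)" using cmp_lazy p e by simp
  show ?thesis unfolding cmp.good_def[OF c]
proof (intro conjI allI impI)
  show "(idK y z + Qd p d y z) / 2 = Plz p y z" if "0 < y" for y z using that by (simp add: Qd_def Delta_pos Plz_def)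
  fix z assume z: "z < p"
  have ne: "(1::nat) \<noteq> p - 1" "(0::nat) \<noteq> 1" "(0::nat) \<noteq> p - 1" using p by auto
  have eq: "(idK 0 z + Qd p d 0 z) / 2 = (if z = 0 then 1/2 else if z = 1 then 1/4 + d/2 else if z = p - 1 then 1/4 - d/2 else 0)"
    "Plz p 0 z = (if z = 0 then 1/2 else if z = 1 then 1/4 else if z = p - 1 then 1/4 else 0)"
    using ne unfolding Plz_def Qd_def srw0[OF p z] Delta0[OF p] idK_def by auto
  show "(1 - 2 * \<epsilon>) * Plz p 0 z \<le> (idK 0 z + Qd p d 0 z) / 2"
    unfolding eq using d e by (cases "z = 0"; cases "z = 1"; cases "z = p - 1") auto
  show "(idK 0 z + Qd p d 0 z) / 2 \<le> (1 + 2 * \<epsilon>) * Plz p 0 z"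
    unfolding eq using d e by (cases "z = 0"; cases "z = 1"; cases "z = p - 1") auto
  have rz: "rf p z < p" using p by (simp add: rf_lt)
  have r0: "(rf p z = 0) = (z = 0)" using z by (auto simp: rf_eq)
  have eq2: "(idK 0 (rf p z) + Qd p d 0 (rf p z)) / 2 = (if z = 0 then 1/2 else if z = p - 1 then 1/4 + d/2 else if z = 1 then 1/4 - d/2 else 0)"
    "Plz p 0 (rf p z) = (if z = 0 then 1/2 else if z = p - 1 then 1/4 else if z = 1 then 1/4 else 0)"
    using ne unfolding Plz_def Qd_def srw0[OF p rz] Delta0[OF p] idK_def rf_1[OF p z] rf_pm1[OF p z] by (auto simp: r0)
  show "(idK 0 z + Qd p d 0 z) / 2 + (idK 0 (rf p z) + Qd p d 0 (rf p z)) / 2 = Plz p 0 z + Plz p 0 (rf p z)"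
    unfolding eq eq2 using ne by auto
qed
qed


lemma srw_Pab: "srw p = Pab 0 1 p" by (simp add: fun_eq_iff Pab_def)
lemma Plz_Pab: "Plz p = Pab (1/2) (1/2) p" by (simp add: fun_eq_iff Pab_def Plz_def)

lemma odd_Pb: assumes N: "1 \<le> N" and p: "p = 2 * N + 1" and m: "360 * N ^ 2 \<le> m" and x: "x < p" and z: "z < p"
  shows "1 / (2 * real p) \<le> kprod p (\<lambda>_. srw p) m x z \<and> kprod p (\<lambda>_. srw p) m x z \<le> 3 / (2 * real p)"
proof -
  have pp: "0 < p" using p by simp
  have e: "kprod p (\<lambda>_. srw p) m x z = G 0 1 p m (real x - real z)"
    unfolding srw_Pab by (rule fourier[OF pp x z])
  have "\<bar>G 0 1 p m (real x - real z) - 1 / real p\<bar> \<le> (1 / real p) * (\<Sum>k\<in>{1..<p}. \<bar>0 + 1 * cos (2 * pi * real k / real p)\<bar> ^ m)"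
    by (rule G_close[OF pp]) simp
  also have "\<dots> \<le> (1 / real p) * (1 / 2)"
    using spec_odd[OF N p m] pp by (intro mult_left_mono) auto
  finally have "\<bar>G 0 1 p m (real x - real z) - 1 / real p\<bar> \<le> 1 / (2 * real p)" by simp
  then show ?thesis unfolding e by (auto simp: abs_le_iff field_simps)
qed

lemma lazy_Pb: assumes N: "1 \<le> N" and p: "p = 2 * N" and m: "360 * N ^ 2 \<le> m" and x: "x < p" and z: "z < p"
  shows "1 / (2 * real p) \<le> kprod p (\<lambda>_. Plz p) m x z \<and> kprod p (\<lambda>_. Plz p) m x z \<le> 3 / (2 * real p)"
proof -
  have pp: "0 < p" using p N by simp
  have e: "kprod p (\<lambda>_. Plz p) m x z = G (1/2) (1/2) p m (real x - real z)"
    unfolding Plz_Pab by (rule fourier[OF pp x z])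
  have "\<bar>G (1/2) (1/2) p m (real x - real z) - 1 / real p\<bar> \<le> (1 / real p) * (\<Sum>k\<in>{1..<p}. \<bar>1/2 + 1/2 * cos (2 * pi * real k / real p)\<bar> ^ m)"
    by (rule G_close[OF pp]) simp
  also have "\<dots> \<le> (1 / real p) * (1 / 2)"
    using spec_lazy[OF N p m] pp by (intro mult_left_mono) auto
  finally have "\<bar>G (1/2) (1/2) p m (real x - real z) - 1 / real p\<bar> \<le> 1 / (2 * real p)" by simp
  then show ?thesis unfolding e by (auto simp: abs_le_iff field_simps)
qed

lemma Plz_row: assumes p: "3 \<le> p" and y: "y < p" shows "(\<Sum>z<p. Plz p y z) = 1"
proof -
  have "(\<Sum>z<p. Plz p y z) = ((\<Sum>z<p. idK y z) + (\<Sum>z<p. srw p y z)) / 2"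
    unfolding Plz_def sum_divide_distrib[symmetric] sum.distrib ..
  also have "(\<Sum>z<p. idK y z) = 1" using y by (simp add: idK_def)
  finally show ?thesis using srw_row[OF p y] by simp
qed

lemma core_odd: assumes N: "1 \<le> N" and p: "p = 2 * N + 1" and e: "0 \<le> \<theta>" "\<theta> < 1"
  shows "core p (srw p) \<theta> (360 * N ^ 2)"
proof (rule core.intro)
  show "cmp p (srw p) \<theta>" using cmp_srw p N e by simp
  show "core_axioms p (srw p) \<theta> (360 * N ^ 2)"
  proof (rule core_axioms.intro)
    show "\<theta> < 1" by (rule e)
    show "(\<Sum>z<p. srw p y z) = 1" if "y < p" for y
    proof -
      have "3 \<le> p" using p N by simp
      then show ?thesis using srw_row that by blast
    qed
    show "1 \<le> 360 * N ^ 2" using N by simp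
    show "1 / (2 * real p) \<le> kprod p (\<lambda>_. srw p) m x z \<and> kprod p (\<lambda>_. srw p) m x z \<le> 3 / (2 * real p)"
      if "360 * N ^ 2 \<le> m" "x < p" "z < p" for m x z using odd_Pb[OF N p that] .
  qed
qed

lemma core_lazy: assumes N: "3 \<le> 2 * N" and p: "p = 2 * N" and e: "0 \<le> \<theta>" "\<theta> < 1"
  shows "core p (Plz p) \<theta> (360 * N ^ 2)"
proof (rule core.intro)
  have N1: "1 \<le> N" using N by simp
  show "cmp p (Plz p) \<theta>" using cmp_lazy p N e by simp
  show "core_axioms p (Plz p) \<theta> (360 * N ^ 2)"
  proof (rule core_axioms.intro)
    show "\<theta> < 1" by (rule e)
    show "(\<Sum>z<p. Plz p y z) = 1" if "y < p" for y
    proof -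
      have "3 \<le> p" using p N by simp
      then show ?thesis using Plz_row that by blast
    qed
    show "1 \<le> 360 * N ^ 2" using N1 by simp
    show "1 / (2 * real p) \<le> kprod p (\<lambda>_. Plz p) m x z \<and> kprod p (\<lambda>_. Plz p) m x z \<le> 3 / (2 * real p)"
      if "360 * N ^ 2 \<le> m" "x < p" "z < p" for m x z using lazy_Pb[OF N1 p that] .
  qed
qed


lemma numeric:
  assumes a: "0 < \<alpha>" "\<alpha> \<le> 1" and R: "0 \<le> R" and eta: "0 < \<eta>" and L: "1 \<le> L"
    and n: "real n \<ge> ((R + 2 * \<alpha> + 1) / \<alpha>) * real L * (1 + log_plus (1 / \<eta>))"
  shows "L \<le> n \<and> (1 - \<alpha>) ^ (n div L - 1) * R \<le> \<eta>"
proof -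
  define l where "l = log_plus (1 / \<eta>)"
  define \<beta> where "\<beta> = (R + 2 * \<alpha> + 1) / \<alpha>"
  have l0: "0 \<le> l" and l1: "- ln \<eta> \<le> l" using eta by (auto simp: l_def log_plus_def ln_div)
  have ab: "\<alpha> * \<beta> = R + 2 * \<alpha> + 1" using a by (simp add: \<beta>_def)
  have b1: "1 \<le> \<beta>" using a R by (simp add: \<beta>_def le_divide_eq)
  define q where "q = real n / real L"
  have Lp: "0 < real L" using L by simp
  have qb: "\<beta> * (1 + l) \<le> q" using n Lp unfolding q_def \<beta>_def l_def by (simp add: le_divide_eq algebra_simps)
  have "1 \<le> \<beta> * (1 + l)" using b1 l0 by (metis add_increasing2 mult_le_cancel_left1 order.trans le_add_same_cancel1 zero_le_one order_less_le_trans zero_less_one mult_right_mono mult_1_left)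
  then have q1: "1 \<le> q" using qb by linarith
  then have nL: "L \<le> n" using Lp unfolding q_def by (simp add: le_divide_eq)
  define j where "j = n div L - 1"
  have "real n < (real (n div L) + 1) * real L"
  proof -
    have e: "n div L * L + n mod L = n" by (rule div_mult_mod_eq)
    have "n mod L < L" using L by simp
    moreover have "(n div L + 1) * L = n div L * L + L" by simp
    ultimately have "n < (n div L + 1) * L" using e by linarith
    then show ?thesis by (metis of_nat_1 of_nat_add of_nat_less_iff of_nat_mult)
  qed
  then have "q < real (n div L) + 1" using Lp unfolding q_def by (simp add: divide_less_eq)
  moreover have "1 \<le> n div L"
  proof -
    have "0 < n div L" using nL L by (simp add: div_greater_zero_iff)
    then show ?thesis by simp
  qed
  ultimately have jq: "q - 2 \<le> real j" unfolding j_def by (simp add: of_nat_diff)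
  have "\<alpha> * (q - 2) \<le> \<alpha> * real j" using jq a by (intro mult_left_mono) auto
  moreover have "\<alpha> * (\<beta> * (1 + l)) \<le> \<alpha> * q" using qb a by (intro mult_left_mono) auto
  moreover have "\<alpha> * (\<beta> * (1 + l)) = (R + 2 * \<alpha> + 1) * (1 + l)" by (simp only: mult.assoc[symmetric] ab)
  moreover have "R + 1 + l \<le> (R + 2 * \<alpha> + 1) * (1 + l) - 2 * \<alpha>"
  proof -
    have "l \<le> (R + 2 * \<alpha> + 1) * l" using l0 a R by (simp add: algebra_simps mult_nonneg_nonneg)
    then show ?thesis by (simp add: algebra_simps)
  qed
  ultimately have aj: "R + 1 + l \<le> \<alpha> * real j" by (simp add: algebra_simps)
  have "(1 - \<alpha>) ^ j \<le> exp (- \<alpha>) ^ j" using a exp_ge_add_one_self[of "- \<alpha>"] by (intro power_mono) auto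
  also have "\<dots> = exp (- (\<alpha> * real j))" by (simp add: exp_of_nat_mult[symmetric] algebra_simps)
  also have "\<dots> \<le> exp (- (R + 1 + l))" using aj by simp
  also have "\<dots> = exp (- (R + 1)) * exp (- l)" by (simp add: exp_add[symmetric])
  finally have pw: "(1 - \<alpha>) ^ j \<le> exp (- (R + 1)) * exp (- l)" .
  have "R * exp (- (R + 1)) \<le> 1"
  proof -
    have "R \<le> exp (R + 1)" using exp_ge_add_one_self[of "R + 1"] by linarith
    then have "R / exp (R + 1) \<le> 1" by (simp add: divide_le_eq)
    moreover have "exp (- (R + 1)) = 1 / exp (R + 1)" by (subst exp_minus) (simp add: inverse_eq_divide)
    ultimately show ?thesis by simp
  qed
  moreover have "exp (- l) \<le> \<eta>"
  proof -
    have "exp (- l) \<le> exp (ln \<eta>)" using l1 by simp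
    then show ?thesis using eta by simp
  qed
  ultimately have "R * (exp (- (R + 1)) * exp (- l)) \<le> \<eta>"
  proof -
    assume h1: "R * exp (- (R + 1)) \<le> 1" and h2: "exp (- l) \<le> \<eta>"
    have "R * (exp (- (R + 1)) * exp (- l)) = (R * exp (- (R + 1))) * exp (- l)" by simp
    also have "\<dots> \<le> 1 * exp (- l)" using h1 by (intro mult_right_mono) auto
    finally have "R * (exp (- (R + 1)) * exp (- l)) \<le> 1 * exp (- l)" .
    then show ?thesis using h2 by linarith
  qed
  moreover have "(1 - \<alpha>) ^ j * R \<le> R * (exp (- (R + 1)) * exp (- l))" using pw R by (simp add: mult.commute mult_left_mono)
  ultimately show ?thesis using nL unfolding j_def by linarith
qed

lemma rc_from: assumes "0 < b" "\<bar>a - b\<bar> \<le> \<rho> * b" "\<rho> \<le> \<eta>" shows "ratio_close a b \<eta>"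
proof -
  have "a / b - 1 = (a - b) / b" using assms(1) by (simp add: diff_divide_distrib)
  then have "\<bar>a / b - 1\<bar> = \<bar>a - b\<bar> / b" using assms(1) by simp
  also have "\<dots> \<le> \<rho>" using assms(1,2) by (simp add: divide_le_eq)
  finally show ?thesis using assms by (simp add: ratio_close_def)
qed

lemma rc_refl: "0 < \<eta> \<Longrightarrow> ratio_close a a \<eta>" by (simp add: ratio_close_def)

lemma tv_bound: assumes "\<And>z. z < p \<Longrightarrow> \<bar>\<mu> z - \<nu> z\<bar> \<le> \<eta> * \<nu> z" "\<And>z. z < p \<Longrightarrow> 0 \<le> \<nu> z" "(\<Sum>z<p. \<nu> z) = 1" "0 \<le> \<eta>"
  shows "tv p \<mu> \<nu> \<le> \<eta>"
proof -
  let ?S = "(\<lambda>A. (\<Sum>z\<in>A. \<mu> z) - (\<Sum>z\<in>A. \<nu> z)) ` Pow {0..<p}"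
  have fin: "finite ?S" by simp
  have nem: "?S \<noteq> {}" by blast
  have "\<forall>t\<in>?S. t \<le> \<eta>"
  proof
  fix t assume "t \<in> (\<lambda>A. (\<Sum>z\<in>A. \<mu> z) - (\<Sum>z\<in>A. \<nu> z)) ` Pow {0..<p}"
  then obtain A where A: "A \<subseteq> {0..<p}" and t: "t = (\<Sum>z\<in>A. \<mu> z) - (\<Sum>z\<in>A. \<nu> z)" by auto
  have fin: "finite A" using A finite_subset by blast
  have "t = (\<Sum>z\<in>A. \<mu> z - \<nu> z)" by (simp add: t sum_subtractf)
  also have "\<dots> \<le> (\<Sum>z\<in>A. \<eta> * \<nu> z)" using A assms(1) by (intro sum_mono) (auto simp: abs_le_iff)
  also have "\<dots> \<le> (\<Sum>z\<in>{0..<p}. \<eta> * \<nu> z)" using A assms(2,4) by (intro sum_mono2) auto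
  also have "\<dots> = \<eta>" using assms(3) by (simp add: sum_distrib_left[symmetric] atLeast0LessThan)
  finally show "t \<le> \<eta>" .
  qed
  then show ?thesis unfolding tv_def using Max_le_iff[OF fin nem] by blast
qed

lemma tv_self: "0 \<le> \<eta> \<Longrightarrow> tv p \<mu> \<mu> \<le> \<eta>"
proof -
  assume e: "0 \<le> \<eta>"
  have "(\<lambda>A. (\<Sum>z\<in>A. \<mu> z) - (\<Sum>z\<in>A. \<mu> z)) ` Pow {0..<p} = {0::real}" by auto
  then show ?thesis using e by (simp add: tv_def)
qed

context core
begin

lemma ratio_ok:
  assumes K: "\<And>i. i \<ge> 1 \<Longrightarrow> good (K i)" and n: "L \<le> n" and x: "x < p" and y: "y < p" and z: "z < p"
  shows "0 < kprod p K n y z \<and> \<bar>kprod p K n x z - kprod p K n y z\<bar> \<le> (1 - \<alpha>) ^ (n div L - 1) * R * kprod p K n y z"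
proof -
  define j where "j = n div L - 1"
  define s where "s = n mod L + L"
  have "1 \<le> n div L"
  proof -
    have "0 < n div L" using n L1 by (simp add: div_greater_zero_iff)
    then show ?thesis by simp
  qed
  then obtain k where k: "n div L = Suc k" by (cases "n div L") auto
  have ne: "j * L + s = n" unfolding j_def s_def k using div_mult_mod_eq[of n L] k by simp
  have s: "L \<le> s" by (simp add: s_def)
  obtain lo hi where lo: "0 < lo" and b: "\<forall>u<p. lo \<le> kprod p K (j * L + s) u z \<and> kprod p K (j * L + s) u z \<le> hi"
    and d: "hi - lo \<le> (1 - \<alpha>) ^ j * R * lo" using iter[where K=K and j=j, OF K s z] by blast
  have bx: "lo \<le> kprod p K n x z" "kprod p K n x z \<le> hi" and yb: "lo \<le> kprod p K n y z" "kprod p K n y z \<le> hi"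
    using b x y ne by auto
  have rho: "0 \<le> (1 - \<alpha>) ^ j * R" using alpha R0 by simp
  have "\<bar>kprod p K n x z - kprod p K n y z\<bar> \<le> hi - lo" using bx yb by (simp add: abs_le_iff)
  also have "\<dots> \<le> (1 - \<alpha>) ^ j * R * lo" by (rule d)
  also have "\<dots> \<le> (1 - \<alpha>) ^ j * R * kprod p K n y z" using yb(1) rho by (intro mult_left_mono) auto
  finally show ?thesis using lo yb(1) unfolding j_def by auto
qed

lemma conclude:
  assumes K: "\<And>i. i \<ge> 1 \<Longrightarrow> good (K i)" and eta: "0 < \<eta>"
    and n: "real n \<ge> ((R + 2 * \<alpha> + 1) / \<alpha>) * real L * (1 + log_plus (1 / \<eta>))"
    and x: "x < p" and y: "y < p"
  shows "(\<forall>z<p. ratio_close (kprod p K n x z) (kprod p K n y z) \<eta>) \<and> tv p (kprod p K n x) (kprod p K n y) \<le> \<eta>"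
proof -
  have num: "L \<le> n \<and> (1 - \<alpha>) ^ (n div L - 1) * R \<le> \<eta>"
    by (rule numeric[OF alpha R0 eta L1 n])
  have rz: "0 < kprod p K n y z \<and> \<bar>kprod p K n x z - kprod p K n y z\<bar> \<le> \<eta> * kprod p K n y z" if z: "z < p" for z
  proof -
    have r: "0 < kprod p K n y z \<and> \<bar>kprod p K n x z - kprod p K n y z\<bar> \<le> (1 - \<alpha>) ^ (n div L - 1) * R * kprod p K n y z"
      using ratio_ok[where K=K, OF K _ x y z] num by blast
    have "(1 - \<alpha>) ^ (n div L - 1) * R * kprod p K n y z \<le> \<eta> * kprod p K n y z"
      using num r by (intro mult_right_mono) auto
    then show ?thesis using r by linarith
  qed
  have "ratio_close (kprod p K n x z) (kprod p K n y z) \<eta>" if "z < p" for z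
    using rz[OF that] by (intro rc_from[where \<rho> = \<eta>]) auto
  moreover have "tv p (kprod p K n x) (kprod p K n y) \<le> \<eta>"
  proof (rule tv_bound)
    show "\<And>z. z < p \<Longrightarrow> \<bar>kprod p K n x z - kprod p K n y z\<bar> \<le> \<eta> * kprod p K n y z" using rz by blast
    show "\<And>z. z < p \<Longrightarrow> 0 \<le> kprod p K n y z" by (rule kprod_nonneg) (use good_nn K in auto)
    show "(\<Sum>z<p. kprod p K n y z) = 1" by (rule kprod_rowsum[OF _ y]) (use good_row K in auto)
    show "0 \<le> \<eta>" using eta by simp
  qed
  ultimately show ?thesis by blast
qed

lemma conclude2:
  assumes K: "\<And>i. i \<ge> 1 \<Longrightarrow> good (K i)" and eta: "0 < \<eta>"
    and n: "real n \<ge> ((3 * (1 + \<theta>) / (1 - \<theta>) - 1 + 2 * ((1 - \<theta>) / 2) + 1) / ((1 - \<theta>) / 2)) * real L * (1 + log_plus (1 / \<eta>))"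
    and x: "x < p" and y: "y < p"
  shows "(\<forall>z<p. ratio_close (kprod p K n x z) (kprod p K n y z) \<eta>) \<and> tv p (kprod p K n x) (kprod p K n y) \<le> \<eta>"
proof -
  have e: "(R + 2 * \<alpha> + 1) / \<alpha> = (3 * (1 + \<theta>) / (1 - \<theta>) - 1 + 2 * ((1 - \<theta>) / 2) + 1) / ((1 - \<theta>) / 2)"
    by (simp only: \<alpha>_def R_def)
  have n': "real n \<ge> ((R + 2 * \<alpha> + 1) / \<alpha>) * real L * (1 + log_plus (1 / \<eta>))"
    unfolding e by (rule n)
  show ?thesis by (rule conclude[OF K eta n' x y])
qed

end


theorem theorem3p5:
  fixes \<epsilon> :: real
  assumes "0 < \<epsilon>" and "\<epsilon> < 1/2"
  shows "\<exists>B::real. 0 < B \<and>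
    (\<forall>(N::nat) (\<eta>::real). \<eta> > 0 \<longrightarrow>
      ((2 * N \<ge> 3 \<longrightarrow>
         (\<forall>K. (\<forall>i\<ge>1. K i \<in> Qlazy (2 * N) \<epsilon>) \<longrightarrow>
            (\<forall>n::nat. real n \<ge> B * real N ^ 2 * (1 + log_plus (1 / \<eta>)) \<longrightarrow>
               (\<forall>x<2 * N. \<forall>y<2 * N. \<forall>z<2 * N.
                  ratio_close (kprod (2 * N) K n x z) (kprod (2 * N) K n y z) \<eta>)))
         \<and> merging_time_le (2 * N) (Qlazy (2 * N) \<epsilon>) \<eta> (B * real N ^ 2 * (1 + log_plus (1 / \<eta>))))
     \<and> (\<forall>K. (\<forall>i\<ge>1. K i \<in> Qfam (2 * N + 1) \<epsilon>) \<longrightarrow>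
            (\<forall>n::nat. real n \<ge> B * real N ^ 2 * (1 + log_plus (1 / \<eta>)) \<longrightarrow>
               (\<forall>x<2 * N + 1. \<forall>y<2 * N + 1. \<forall>z<2 * N + 1.
                  ratio_close (kprod (2 * N + 1) K n x z) (kprod (2 * N + 1) K n y z) \<eta>)))
       \<and> merging_time_le (2 * N + 1) (Qfam (2 * N + 1) \<epsilon>) \<eta> (B * real N ^ 2 * (1 + log_plus (1 / \<eta>)))))"
proof -
  define \<theta> where "\<theta> = 2 * \<epsilon>"
  have th: "0 \<le> \<theta>" "\<theta> < 1" using assms by (auto simp: \<theta>_def)
  define \<beta> where "\<beta> = (3 * (1 + \<theta>) / (1 - \<theta>) - 1 + 2 * ((1 - \<theta>) / 2) + 1) / ((1 - \<theta>) / 2)"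
  have "1 \<le> 3 * (1 + \<theta>) / (1 - \<theta>)" using th by (simp add: le_divide_eq)
  moreover have "\<And>X::real. 1 \<le> X \<Longrightarrow> \<theta> < 1 \<Longrightarrow> 0 < X - 1 + 2 * ((1 - \<theta>) / 2) + 1" by (simp add: field_simps)
  ultimately have "0 < 3 * (1 + \<theta>) / (1 - \<theta>) - 1 + 2 * ((1 - \<theta>) / 2) + 1" using th by blast
  then have b0: "0 < \<beta>" unfolding \<beta>_def using th by (intro divide_pos_pos) auto
  define B where "B = 360 * \<beta>"
  have BL: "B * real N ^ 2 * t = \<beta> * real (360 * N ^ 2) * t" for N :: nat and t
    by (simp add: B_def)
  have lazy_good: "cmp.good (2 * N) (Plz (2 * N)) \<theta> (K i)"
    if h: "3 \<le> 2 * N" "\<forall>i\<ge>1. K i \<in> Qlazy (2 * N) \<epsilon>" "1 \<le> i" for N K i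
  proof -
    obtain K' where K': "K i = (\<lambda>x y. (idK x y + K' x y) / 2)" "K' \<in> Qfam (2 * N) \<epsilon>"
    proof -
      have "K i \<in> Qlazy (2 * N) \<epsilon>" using h by blast
      then show ?thesis using that unfolding Qlazy_def by blast
    qed
    then obtain d where d: "K' = Qd (2 * N) d" "- \<epsilon> \<le> d" "d \<le> \<epsilon>" by (auto simp: Qfam_def)
    show ?thesis unfolding K' d \<theta>_def by (rule Qlazy_good) (use h assms d in auto)
  qed
  have odd_good: "cmp.good (2 * N + 1) (srw (2 * N + 1)) \<theta> (K i)"
    if "1 \<le> N" "\<forall>i\<ge>1. K i \<in> Qfam (2 * N + 1) \<epsilon>" "1 \<le> i" for N K i
  proof -
    have "K i \<in> Qfam (2 * N + 1) \<epsilon>" using that by blast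
    then obtain d where d: "K i = Qd (2 * N + 1) d" "- \<epsilon> \<le> d" "d \<le> \<epsilon>" unfolding Qfam_def by blast
    show ?thesis unfolding d \<theta>_def by (rule Qd_good) (use that assms d in auto)
  qed
  have part: "\<forall>(N::nat) (\<eta>::real). \<eta> > 0 \<longrightarrow>
      ((2 * N \<ge> 3 \<longrightarrow>
         (\<forall>K. (\<forall>i\<ge>1. K i \<in> Qlazy (2 * N) \<epsilon>) \<longrightarrow>
            (\<forall>n::nat. real n \<ge> B * real N ^ 2 * (1 + log_plus (1 / \<eta>)) \<longrightarrow>
               (\<forall>x<2 * N. \<forall>y<2 * N. \<forall>z<2 * N.
                  ratio_close (kprod (2 * N) K n x z) (kprod (2 * N) K n y z) \<eta>)))
         \<and> merging_time_le (2 * N) (Qlazy (2 * N) \<epsilon>) \<eta> (B * real N ^ 2 * (1 + log_plus (1 / \<eta>))))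
     \<and> (\<forall>K. (\<forall>i\<ge>1. K i \<in> Qfam (2 * N + 1) \<epsilon>) \<longrightarrow>
            (\<forall>n::nat. real n \<ge> B * real N ^ 2 * (1 + log_plus (1 / \<eta>)) \<longrightarrow>
               (\<forall>x<2 * N + 1. \<forall>y<2 * N + 1. \<forall>z<2 * N + 1.
                  ratio_close (kprod (2 * N + 1) K n x z) (kprod (2 * N + 1) K n y z) \<eta>)))
       \<and> merging_time_le (2 * N + 1) (Qfam (2 * N + 1) \<epsilon>) \<eta> (B * real N ^ 2 * (1 + log_plus (1 / \<eta>))))"
  proof (intro allI impI)
    fix N :: nat and \<eta> :: real
    assume eta: "0 < \<eta>"
    have L: "2 * N \<ge> 3 \<longrightarrow>
         (\<forall>K. (\<forall>i\<ge>1. K i \<in> Qlazy (2 * N) \<epsilon>) \<longrightarrow>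
            (\<forall>n::nat. real n \<ge> B * real N ^ 2 * (1 + log_plus (1 / \<eta>)) \<longrightarrow>
               (\<forall>x<2 * N. \<forall>y<2 * N. \<forall>z<2 * N.
                  ratio_close (kprod (2 * N) K n x z) (kprod (2 * N) K n y z) \<eta>)))
         \<and> merging_time_le (2 * N) (Qlazy (2 * N) \<epsilon>) \<eta> (B * real N ^ 2 * (1 + log_plus (1 / \<eta>)))"
    proof
      assume N3: "3 \<le> 2 * N"
      have c: "core (2 * N) (Plz (2 * N)) \<theta> (360 * N ^ 2)" using core_lazy[OF N3 refl th] .
      have main: "(\<forall>z<2 * N. ratio_close (kprod (2 * N) K n x z) (kprod (2 * N) K n y z) \<eta>) \<and> tv (2 * N) (kprod (2 * N) K n x) (kprod (2 * N) K n y) \<le> \<eta>"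
        if K: "\<forall>i\<ge>1. K i \<in> Qlazy (2 * N) \<epsilon>" and n: "B * real N ^ 2 * (1 + log_plus (1 / \<eta>)) \<le> real n"
          and x: "x < 2 * N" and y: "y < 2 * N" for K n x y
        by (rule core.conclude2[OF c _ eta _ x y]) (use lazy_good[OF N3 K] n BL \<beta>_def in auto)
      show "(\<forall>K. (\<forall>i\<ge>1. K i \<in> Qlazy (2 * N) \<epsilon>) \<longrightarrow>
            (\<forall>n::nat. real n \<ge> B * real N ^ 2 * (1 + log_plus (1 / \<eta>)) \<longrightarrow>
               (\<forall>x<2 * N. \<forall>y<2 * N. \<forall>z<2 * N.
                  ratio_close (kprod (2 * N) K n x z) (kprod (2 * N) K n y z) \<eta>)))
         \<and> merging_time_le (2 * N) (Qlazy (2 * N) \<epsilon>) \<eta> (B * real N ^ 2 * (1 + log_plus (1 / \<eta>)))"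
        unfolding merging_time_le_def using main by (meson less_imp_le)
    qed
    have main: "(\<forall>z<2 * N + 1. ratio_close (kprod (2 * N + 1) K n x z) (kprod (2 * N + 1) K n y z) \<eta>) \<and> tv (2 * N + 1) (kprod (2 * N + 1) K n x) (kprod (2 * N + 1) K n y) \<le> \<eta>"
      if K: "\<forall>i\<ge>1. K i \<in> Qfam (2 * N + 1) \<epsilon>" and n: "B * real N ^ 2 * (1 + log_plus (1 / \<eta>)) \<le> real n"
        and x: "x < 2 * N + 1" and y: "y < 2 * N + 1" for K n x y
    proof (cases "N = 0")
      case True
      then have "x = 0" "y = 0" using x y by auto
      then show ?thesis using eta rc_refl tv_self[of \<eta>] True by auto
    next
      case False
      then have N1: "1 \<le> N" by simp
      have c: "core (2 * N + 1) (srw (2 * N + 1)) \<theta> (360 * N ^ 2)" using core_odd[OF N1 refl th] .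
      show ?thesis
        by (rule core.conclude2[OF c _ eta _ x y]) (use odd_good[OF N1 K] n BL \<beta>_def in auto)
    qed
    have O: "(\<forall>K. (\<forall>i\<ge>1. K i \<in> Qfam (2 * N + 1) \<epsilon>) \<longrightarrow>
            (\<forall>n::nat. real n \<ge> B * real N ^ 2 * (1 + log_plus (1 / \<eta>)) \<longrightarrow>
               (\<forall>x<2 * N + 1. \<forall>y<2 * N + 1. \<forall>z<2 * N + 1.
                  ratio_close (kprod (2 * N + 1) K n x z) (kprod (2 * N + 1) K n y z) \<eta>)))
       \<and> merging_time_le (2 * N + 1) (Qfam (2 * N + 1) \<epsilon>) \<eta> (B * real N ^ 2 * (1 + log_plus (1 / \<eta>)))"
      unfolding merging_time_le_def using main by (meson less_imp_le)
    show "(2 * N \<ge> 3 \<longrightarrow>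
         (\<forall>K. (\<forall>i\<ge>1. K i \<in> Qlazy (2 * N) \<epsilon>) \<longrightarrow>
            (\<forall>n::nat. real n \<ge> B * real N ^ 2 * (1 + log_plus (1 / \<eta>)) \<longrightarrow>
               (\<forall>x<2 * N. \<forall>y<2 * N. \<forall>z<2 * N.
                  ratio_close (kprod (2 * N) K n x z) (kprod (2 * N) K n y z) \<eta>)))
         \<and> merging_time_le (2 * N) (Qlazy (2 * N) \<epsilon>) \<eta> (B * real N ^ 2 * (1 + log_plus (1 / \<eta>))))
     \<and> (\<forall>K. (\<forall>i\<ge>1. K i \<in> Qfam (2 * N + 1) \<epsilon>) \<longrightarrow>
            (\<forall>n::nat. real n \<ge> B * real N ^ 2 * (1 + log_plus (1 / \<eta>)) \<longrightarrow>
               (\<forall>x<2 * N + 1. \<forall>y<2 * N + 1. \<forall>z<2 * N + 1.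
                  ratio_close (kprod (2 * N + 1) K n x z) (kprod (2 * N + 1) K n y z) \<eta>)))
       \<and> merging_time_le (2 * N + 1) (Qfam (2 * N + 1) \<epsilon>) \<eta> (B * real N ^ 2 * (1 + log_plus (1 / \<eta>)))"
      using L O by blast
  qed
  moreover have "0 < B" using b0 by (simp add: B_def)
  ultimately show ?thesis by blast
qed


end
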